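(* Let $m$ be an odd positive integer, $D=D_{2m}$, $\sigma=\sigma_{2m}$, $\tau=\tau_{2m}$, and let $E_m:=\ker\Psi_m$ where $\Psi_m\colon R_m\to I_m$ is as follows: $I_m\subset\mathbb{Z}[D/\langle\sigma^m\rangle]\oplus\mathbb{Z}[D/\langle\tau\rangle]$ is the kernel of the sum of augmentations, $R_m:=\mathbb{Z}[D]\oplus\mathbb{Z}[D/\langle\sigma^m\rangle]\oplus\mathbb{Z}$, and $\Psi_m(x_1,x_2,x_3)=\psi_1(x_1)+\psi_2(x_2)+\psi_3(x_3)$ with $D$-homomorphisms determined by $\psi_1(1)=(1,-1)$, $\psi_2(1)=(1+\sigma^2,-(1+\sigma^m))$, $\psi_3(1)=((\sum_{i=0}^{m-1}\sigma^i)(1+\tau),-\sum_{i=0}^{2m-1}\sigma^i)$. Then there is an isomorphism of $D$-lattices $$E_m\oplus\mathbb{Z}[D/\langle\sigma^2,\sigma^m\tau\rangle]\cong\mathbb{Z}[D/\langle\sigma^m\tau\rangle]\oplus\mathbb{Z}[D/\langle\sigma\rangle]\oplus\mathbb{Z}[D/\langle\sigma^2,\sigma^m\tau\rangle].$$ In particular $E_m$ is stably permutation.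
   Context: $D_{n}:=\langle\sigma_n,\tau_n\mid\sigma_n^n=\tau_n^2=1,\ \tau_n\sigma_n\tau_n^{-1}=\sigma_n^{-1}\rangle$ is the dihedral group of order $2n$. In $\mathbb{Z}[D/H]$, an element $g\in D$ denotes the coset $gH$, extended $\mathbb{Z}$-linearly; $\mathbb{Z}$ carries trivial action; the augmentation $\mathbb{Z}[D/H]\to\mathbb{Z}$ sends each coset to $1$. A lattice $M$ is stably permutation if $M\oplus R\cong R'$ with $R,R'$ having $\mathbb{Z}$-bases permuted by the group. *)

theory Defs
  imports "HOL-Algebra.Algebra" "HOL-Algebra.Left_Coset" "HOL-Library.Function_Algebras" "HOL-Library.Product_Plus"
begin

text \<open>(a, s) represents sigma^a tau^s with 0 <= a < n.  Multiplication uses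
  tau sigma^b = sigma^(-b) tau.\<close>

definition dmul :: "nat \<Rightarrow> nat \<times> bool \<Rightarrow> nat \<times> bool \<Rightarrow> nat \<times> bool" where
  "dmul n x y = (case x of (a, s) \<Rightarrow> case y of (b, t) \<Rightarrow>
      ((if s then a + (n - b mod n) else a + b) mod n, s \<noteq> t))"

definition Dih :: "nat \<Rightarrow> (nat \<times> bool) monoid" where
  "Dih n = \<lparr>carrier = {0..<n} \<times> UNIV, monoid.mult = dmul n, one = (0, False)\<rparr>"

definition dsig :: "nat \<Rightarrow> nat \<times> bool" where "dsig n = (1 mod n, False)"
definition dtau :: "nat \<times> bool" where "dtau = (0, True)"

text \<open>Elements of Z[G/H]: integer-valued functions on the set of left cosets.\<close>
definition perm_mod :: "('a, 'b) monoid_scheme \<Rightarrow> 'a set \<Rightarrow> ('a set \<Rightarrow> int) set" where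
  "perm_mod G H = {f. \<forall>C. C \<notin> lcosets\<^bsub>G\<^esub> H \<longrightarrow> f C = 0}"

text \<open>Action of g: (g . f)(C) = f(g^-1 C), i.e. g sends the basis coset C to gC.\<close>
definition pact :: "('a, 'b) monoid_scheme \<Rightarrow> 'a set \<Rightarrow> 'a \<Rightarrow> ('a set \<Rightarrow> int) \<Rightarrow> ('a set \<Rightarrow> int)" where
  "pact G H g f = (\<lambda>C. if C \<in> lcosets\<^bsub>G\<^esub> H then f (l_coset G (inv\<^bsub>G\<^esub> g) C) else 0)"

definition bas :: "('a, 'b) monoid_scheme \<Rightarrow> 'a set \<Rightarrow> 'a \<Rightarrow> ('a set \<Rightarrow> int)" where
  "bas G H g = (\<lambda>C. if C = l_coset G g H then 1 else 0)"

definition rep :: "('a, 'b) monoid_scheme \<Rightarrow> 'a set \<Rightarrow> 'a set \<Rightarrow> 'a" where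
  "rep G H C = (SOME g. g \<in> carrier G \<and> C = l_coset G g H)"

definition dmod_iso :: "('g, 'b) monoid_scheme \<Rightarrow> 'm::plus set \<Rightarrow> ('g \<Rightarrow> 'm \<Rightarrow> 'm)
    \<Rightarrow> 'n::plus set \<Rightarrow> ('g \<Rightarrow> 'n \<Rightarrow> 'n) \<Rightarrow> bool" where
  "dmod_iso G M actM N actN \<longleftrightarrow> (\<exists>\<phi>. bij_betw \<phi> M N
      \<and> (\<forall>x\<in>M. \<forall>y\<in>M. \<phi> (x + y) = \<phi> x + \<phi> y)
      \<and> (\<forall>g\<in>carrier G. \<forall>x\<in>M. \<phi> (actM g x) = actN g (\<phi> x)))"

definition DD :: "nat \<Rightarrow> (nat \<times> bool) monoid" where "DD m = Dih (2 * m)"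
definition sg :: "nat \<Rightarrow> nat \<times> bool" where "sg m = dsig (2 * m)"

definition spow :: "nat \<Rightarrow> nat \<Rightarrow> nat \<times> bool" where
  "spow m i = sg m [^]\<^bsub>DD m\<^esub> i"

definition H_triv :: "nat \<Rightarrow> (nat \<times> bool) set" where "H_triv m = {\<one>\<^bsub>DD m\<^esub>}"
definition H_sm :: "nat \<Rightarrow> (nat \<times> bool) set" where
  "H_sm m = generate (DD m) {spow m m}"
definition H_t :: "nat \<Rightarrow> (nat \<times> bool) set" where
  "H_t m = generate (DD m) {dtau}"
definition H_s :: "nat \<Rightarrow> (nat \<times> bool) set" where
  "H_s m = generate (DD m) {sg m}"
definition H_smt :: "nat \<Rightarrow> (nat \<times> bool) set" where
  "H_smt m = generate (DD m) {spow m m \<otimes>\<^bsub>DD m\<^esub> dtau}"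
definition H_s2smt :: "nat \<Rightarrow> (nat \<times> bool) set" where
  "H_s2smt m = generate (DD m) {spow m 2, spow m m \<otimes>\<^bsub>DD m\<^esub> dtau}"

type_synonym elt = "(nat \<times> bool) set \<Rightarrow> int"

definition tact :: "nat \<Rightarrow> nat \<times> bool \<Rightarrow> elt \<times> elt \<Rightarrow> elt \<times> elt" where
  "tact m g v = (pact (DD m) (H_sm m) g (fst v), pact (DD m) (H_t m) g (snd v))"

definition tsc :: "int \<Rightarrow> elt \<times> elt \<Rightarrow> elt \<times> elt" where
  "tsc k v = ((\<lambda>C. k * fst v C), (\<lambda>C. k * snd v C))"

text \<open>The D-homomorphism Z[D/H] -> target determined by 1 |-> v, extended Z-linearly.\<close>
definition ind_hom :: "nat \<Rightarrow> (nat \<times> bool) set \<Rightarrow> elt \<times> elt \<Rightarrow> elt \<Rightarrow> elt \<times> elt" where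
  "ind_hom m H v x = (\<Sum>C\<in>lcosets\<^bsub>DD m\<^esub> H. tsc (x C) (tact m (rep (DD m) H C) v))"

definition v1 :: "nat \<Rightarrow> elt \<times> elt" where
  "v1 m = (bas (DD m) (H_sm m) \<one>\<^bsub>DD m\<^esub>, - bas (DD m) (H_t m) \<one>\<^bsub>DD m\<^esub>)"
definition v2 :: "nat \<Rightarrow> elt \<times> elt" where
  "v2 m = (bas (DD m) (H_sm m) \<one>\<^bsub>DD m\<^esub> + bas (DD m) (H_sm m) (spow m 2),
           - (bas (DD m) (H_t m) \<one>\<^bsub>DD m\<^esub> + bas (DD m) (H_t m) (spow m m)))"
definition v3 :: "nat \<Rightarrow> elt \<times> elt" where
  "v3 m = ((\<Sum>i<m. bas (DD m) (H_sm m) (spow m i)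
                   + bas (DD m) (H_sm m) (spow m i \<otimes>\<^bsub>DD m\<^esub> dtau)),
           - (\<Sum>i<2 * m. bas (DD m) (H_t m) (spow m i)))"

definition R_mod :: "nat \<Rightarrow> (elt \<times> elt \<times> int) set" where
  "R_mod m = perm_mod (DD m) (H_triv m) \<times> perm_mod (DD m) (H_sm m) \<times> (UNIV :: int set)"

definition R_act :: "nat \<Rightarrow> nat \<times> bool \<Rightarrow> elt \<times> elt \<times> int \<Rightarrow> elt \<times> elt \<times> int" where
  "R_act m g x = (case x of (x1, x2, x3) \<Rightarrow>
      (pact (DD m) (H_triv m) g x1, pact (DD m) (H_sm m) g x2, x3))"

definition Psi :: "nat \<Rightarrow> elt \<times> elt \<times> int \<Rightarrow> elt \<times> elt" where
  "Psi m x = (case x of (x1, x2, x3) \<Rightarrow>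
      ind_hom m (H_triv m) (v1 m) x1 + ind_hom m (H_sm m) (v2 m) x2 + tsc x3 (v3 m))"

definition E_mod :: "nat \<Rightarrow> (elt \<times> elt \<times> int) set" where
  "E_mod m = {x \<in> R_mod m. Psi m x = 0}"

end

theory Submission
  imports Defs
begin

definition el :: "nat \<Rightarrow> int \<Rightarrow> bool \<Rightarrow> nat \<times> bool" where
  "el n i s = (nat (i mod int n), s)"

lemma el_eq_iff: "0 < n \<Longrightarrow> el n i s = el n j t \<longleftrightarrow> s = t \<and> i mod int n = j mod int n"
  unfolding el_def by (auto simp: nat_eq_iff2)

lemma nat_mod_lt: "0 < n \<Longrightarrow> nat (j mod int n) < n"
  by (simp add: nat_less_iff)

lemma dmul_el: assumes "0 < n"
  shows "dmul n (el n i s) (el n j t) = el n (if s then i - j else i + j) (s \<noteq> t)"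
proof -
  have b: "nat (j mod int n) mod n = nat (j mod int n)"
    using assms nat_mod_lt by simp
  show ?thesis
  proof (cases s)
    case True
    have "int ((nat (i mod int n) + (n - nat (j mod int n))) mod n) = (i - j) mod int n"
    proof -
      have le: "nat (j mod int n) \<le> n" using assms nat_mod_lt less_imp_le by blast
      have "int ((nat (i mod int n) + (n - nat (j mod int n))) mod n)
          = (i mod int n + (int n - j mod int n)) mod int n"
        using le assms by (simp add: zmod_int of_nat_diff algebra_simps)
      also have "\<dots> = (i - j) mod int n"
        by (metis (no_types, opaque_lifting) group_cancel.sub1 mod_add_self2 mod_diff_eq)
      finally show ?thesis .
    qed
    then have "(nat (i mod int n) + (n - nat (j mod int n))) mod n = nat ((i - j) mod int n)"
      by (simp add: nat_eq_iff2 del: of_nat_mod)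
    then show ?thesis using True b unfolding dmul_def el_def by simp
  next
    case False
    have "int ((nat (i mod int n) + nat (j mod int n)) mod n) = (i + j) mod int n"
      using assms by (simp add: zmod_int mod_simps)
    then have "(nat (i mod int n) + nat (j mod int n)) mod n = nat ((i + j) mod int n)"
      by (simp add: nat_eq_iff2 del: of_nat_mod)
    then show ?thesis using False b unfolding dmul_def el_def by simp
  qed
qed

locale DM =
  fixes m :: nat
  assumes pos: "0 < m"
begin

abbreviation "G \<equiv> DD m"
definition e :: "int \<Rightarrow> bool \<Rightarrow> nat \<times> bool" where "e = el (2*m)"

lemma n_pos: "0 < 2*m" using pos by simp

lemma carrier_G: "carrier G = {(a, s). a < 2*m}"
  by (auto simp: DD_def Dih_def)

lemma el_carrier[simp]: "e i s \<in> carrier G"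
  unfolding carrier_G e_def el_def using nat_mod_lt[OF n_pos] by auto

lemma carrier_el: "g \<in> carrier G \<Longrightarrow> g = e (int (fst g)) (snd g)"
  unfolding carrier_G e_def el_def by (auto simp: mod_pos_pos_trivial)

lemma carrier_cases: "g \<in> carrier G \<Longrightarrow> (\<And>i s. g = e i s \<Longrightarrow> P) \<Longrightarrow> P"
  using carrier_el by blast

lemma mult_G[simp]: "e i s \<otimes>\<^bsub>G\<^esub> e j t = e (if s then i - j else i + j) (s \<noteq> t)"
  using dmul_el[OF n_pos] by (simp add: DD_def Dih_def e_def)

lemma one_G: "\<one>\<^bsub>G\<^esub> = e 0 False"
  by (simp add: DD_def Dih_def el_def e_def)

lemma e_eq_iff: "e i s = e j t \<longleftrightarrow> s = t \<and> i mod (2 * int m) = j mod (2 * int m)"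
  using el_eq_iff[OF n_pos] by (simp add: e_def)

lemma e_mod[simp]: "e (i mod (2 * int m)) s = e i s"
  by (simp add: e_eq_iff)

lemma group_G: "group G"
proof (rule groupI)
  fix x y assume "x \<in> carrier G" "y \<in> carrier G"
  then show "x \<otimes>\<^bsub>G\<^esub> y \<in> carrier G"
    by (auto elim!: carrier_cases)
next
  show "\<one>\<^bsub>G\<^esub> \<in> carrier G" by (simp add: one_G)
next
  fix x y z assume "x \<in> carrier G" "y \<in> carrier G" "z \<in> carrier G"
  then show "x \<otimes>\<^bsub>G\<^esub> y \<otimes>\<^bsub>G\<^esub> z = x \<otimes>\<^bsub>G\<^esub> (y \<otimes>\<^bsub>G\<^esub> z)"
    by (auto elim!: carrier_cases simp: e_eq_iff; simp add: algebra_simps)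
next
  fix x assume "x \<in> carrier G"
  then show "\<one>\<^bsub>G\<^esub> \<otimes>\<^bsub>G\<^esub> x = x"
    by (auto elim!: carrier_cases simp: one_G)
next
  fix x assume "x \<in> carrier G"
  then show "\<exists>y\<in>carrier G. y \<otimes>\<^bsub>G\<^esub> x = \<one>\<^bsub>G\<^esub>"
  proof (elim carrier_cases)
    fix i s assume x: "x = e i s"
    show ?thesis
      by (rule bexI[where x="e (if s then i else - i) s"]) (auto simp: x one_G e_eq_iff)
  qed
qed

lemma inv_G[simp]: "inv\<^bsub>G\<^esub> (e i s) = e (if s then i else - i) s"
  using group_G by (intro group.inv_equality) (auto simp: one_G e_eq_iff)

lemma one_G': "\<one>\<^bsub>G\<^esub> = e 0 False" by (rule one_G)

lemma e_2m[simp]: "e (i + 2 * int m) s = e i s" "e (2 * int m + i) s = e i s" "e (i - 2 * int m) s = e i s"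
  by (simp_all add: e_eq_iff)

lemma e_mm[simp]: "e (int m + int m) s = e 0 s" "e (i + int m + int m) s = e i s" "e (i - int m - int m) s = e i s"
  by (simp_all add: e_eq_iff)

lemma sg_eq: "sg m = e 1 False"
  using pos by (simp add: sg_def dsig_def el_def e_def)

lemma dtau_eq: "dtau = e 0 True"
  by (simp add: dtau_def el_def e_def)

lemma spow_eq: "spow m k = e (int k) False"
proof (induction k)
  case 0 then show ?case by (simp add: spow_def one_G)
next
  case (Suc k)
  have "spow m (Suc k) = spow m k \<otimes>\<^bsub>G\<^esub> sg m"
    by (simp add: spow_def)
  then show ?case using Suc by (simp add: sg_eq add.commute)
qed

end

context DM begin

lemma mod2_2m: "(i mod (2 * int m)) mod 2 = i mod 2"
  by (simp add: mod_mod_cancel)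

lemma e_parity: "e i s = e j t \<Longrightarrow> even i = even j"
  by (metis e_eq_iff mod2_2m even_iff_mod_2_eq_zero)

lemma generate_eqI:
  assumes "S \<subseteq> K" "subgroup K G" "\<And>g. g \<in> K \<Longrightarrow> g \<in> generate G S"
  shows "generate G S = K"
  using group.generate_subgroup_incl[OF group_G assms(1,2)] assms(3) by blast

lemma gen_sub: "S \<subseteq> carrier G \<Longrightarrow> subgroup (generate G S) G"
  using group.generate_is_subgroup[OF group_G] by blast

lemma gen_incl: "x \<in> S \<Longrightarrow> x \<in> generate G S"
  by (rule generate.incl)

lemma gen_mult: "x \<in> generate G S \<Longrightarrow> y \<in> generate G S \<Longrightarrow> x \<otimes>\<^bsub>G\<^esub> y \<in> generate G S"
  by (rule generate.eng)

lemma gen_one: "e 0 False \<in> generate G S"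
  using generate.one[of G S] by (simp add: one_G)

lemma e_negm[simp]: "e (- int m) s = e (int m) s" "e (2 * int m) s = e 0 s"
  by (simp_all add: e_eq_iff zmod_zminus1_eq_if)

lemma H_triv_eq: "H_triv m = {e 0 False}"
  by (simp add: H_triv_def one_G)

lemma H_sm_eq: "H_sm m = {e 0 False, e (int m) False}"
  unfolding H_sm_def spow_eq
proof (rule generate_eqI)
  show "subgroup {e 0 False, e (int m) False} G"
    by (rule group.subgroupI[OF group_G]) (auto simp: one_G)
qed (auto intro: gen_incl gen_one)

lemma H_t_eq: "H_t m = {e 0 False, e 0 True}"
  unfolding H_t_def dtau_eq
proof (rule generate_eqI)
  show "subgroup {e 0 False, e 0 True} G"
    by (rule group.subgroupI[OF group_G]) (auto simp: one_G)
qed (auto intro: gen_incl gen_one)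

lemma H_smt_eq: "H_smt m = {e 0 False, e (int m) True}"
  unfolding H_smt_def dtau_eq spow_eq
proof (rule generate_eqI)
  show "subgroup {e 0 False, e (int m) True} G"
    by (rule group.subgroupI[OF group_G]) (auto simp: one_G)
qed (auto intro: gen_incl gen_one)

lemma e_nat_gen: "e (int k * d) False \<in> generate G {e d False}"
proof (induction k)
  case 0 then show ?case using gen_one by simp
next
  case (Suc k)
  have "e (int k * d) False \<otimes>\<^bsub>G\<^esub> e d False \<in> generate G {e d False}"
    by (rule gen_mult[OF Suc gen_incl]) simp
  then show ?case by (simp add: algebra_simps)
qed

lemma e_F_gen: "e i False \<in> generate G {e 1 False}"
proof -
  have "e i False = e (int (nat (i mod (2 * int m))) * 1) False"
    using pos by simp
  then show ?thesis using e_nat_gen by metis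
qed

lemma H_s_eq: "H_s m = range (\<lambda>i. e i False)"
  unfolding H_s_def sg_eq
proof (rule generate_eqI)
  show "subgroup (range (\<lambda>i. e i False)) G"
  proof (rule group.subgroupI[OF group_G])
    fix a assume "a \<in> range (\<lambda>i. e i False)"
    then obtain i where "a = e i False" by blast
    then show "inv\<^bsub>G\<^esub> a \<in> range (\<lambda>i. e i False)" by simp
  next
    fix a b assume "a \<in> range (\<lambda>i. e i False)" "b \<in> range (\<lambda>i. e i False)"
    then obtain i j where "a = e i False" "b = e j False" by blast
    then show "a \<otimes>\<^bsub>G\<^esub> b \<in> range (\<lambda>i. e i False)" by simp
  qed auto
next
  show "{e 1 False} \<subseteq> range (\<lambda>i. e i False)" by blast
next
  fix g assume "g \<in> range (\<lambda>i. e i False)"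
  then show "g \<in> generate G {e 1 False}" using e_F_gen by blast
qed

definition H2set :: "(nat \<times> bool) set" where
  "H2set = {g. \<exists>i s. g = e i s \<and> even (i + of_bool s)}"

lemma mem_H2set: "e j t \<in> H2set \<longleftrightarrow> even (j + of_bool t)"
proof
  assume "e j t \<in> H2set"
  then obtain i s where "e j t = e i s" "even (i + of_bool s)" by (auto simp: H2set_def)
  moreover have "t = s" using \<open>e j t = e i s\<close> e_eq_iff by blast
  ultimately show "even (j + of_bool t)" using e_parity[of j t i s] by simp
next
  assume "even (j + of_bool t)" then show "e j t \<in> H2set" unfolding H2set_def by blast
qed

lemma H2set_sub: "H2set \<subseteq> carrier G" by (auto simp: H2set_def)


end

locale DMO = DM + assumes odd: "odd m"
begin

lemma gen_mono: "A \<subseteq> B \<Longrightarrow> B \<subseteq> carrier G \<Longrightarrow> generate G A \<subseteq> generate G B"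
  using group.mono_generate[OF group_G] by blast

lemma H_s2smt_eq: "H_s2smt m = H2set"
  unfolding H_s2smt_def dtau_eq spow_eq
proof (rule generate_eqI)
  show "subgroup H2set G"
  proof (rule group.subgroupI[OF group_G])
    show "H2set \<subseteq> carrier G" by (rule H2set_sub)
    have "e 0 False \<in> H2set" by (simp add: mem_H2set)
    then show "H2set \<noteq> {}" by (metis empty_iff)
  next
    fix a assume "a \<in> H2set"
    then obtain i s where a: "a = e i s" and ev: "even (i + of_bool s)" by (auto simp: H2set_def)
    show "inv\<^bsub>G\<^esub> a \<in> H2set" using ev by (simp add: a mem_H2set)
  next
    fix a b assume "a \<in> H2set" "b \<in> H2set"
    then obtain i s j t where a: "a = e i s" and ev: "even (i + of_bool s)"
      and b: "b = e j t" and ev2: "even (j + of_bool t)" by (auto simp: H2set_def)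
    show "a \<otimes>\<^bsub>G\<^esub> b \<in> H2set" using ev ev2 by (auto simp: a b mem_H2set)
  qed
next
  show "{e (int 2) False, e (int m) False \<otimes>\<^bsub>G\<^esub> e 0 True} \<subseteq> H2set"
    using odd by (simp add: mem_H2set)
next
  fix g assume "g \<in> H2set"
  then obtain i s where g: "g = e i s" and ev: "even (i + of_bool s)" by (auto simp: H2set_def)
  let ?S = "{e (int 2) False, e (int m) False \<otimes>\<^bsub>G\<^esub> e 0 True}"
  have sub: "generate G {e 2 False} \<subseteq> generate G ?S"
    by (rule gen_mono) auto
  have evF: "e j False \<in> generate G ?S" if "even j" for j
  proof -
    have "even (j mod (2 * int m))" using that by (simp add: even_iff_mod_2_eq_zero mod2_2m)
    then obtain k where k: "j mod (2 * int m) = 2 * k" by (rule evenE)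
    have "k \<ge> 0" using k pos_mod_sign[of "2*int m" j] pos by linarith
    then have "e j False = e (int (nat k) * 2) False" using k by (metis e_mod mult.commute nat_0_le)
    then show ?thesis using e_nat_gen[of "nat k" 2] sub by auto
  qed
  show "g \<in> generate G ?S"
  proof (cases s)
    case False then show ?thesis using ev g evF by simp
  next
    case True
    have "even (i - int m)" using ev odd True by simp
    then have "e (i - int m) False \<otimes>\<^bsub>G\<^esub> (e (int m) False \<otimes>\<^bsub>G\<^esub> e 0 True) \<in> generate G ?S"
      by (intro gen_mult evF gen_incl) auto
    then show ?thesis using g True by simp
  qed
qed

end

lemma sum_fun_apply: "(\<Sum>i\<in>A. f i) x = (\<Sum>i\<in>A. (f i x :: 'b :: comm_monoid_add))"
  by (induction A rule: infinite_finite_induct) auto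

lemma lcoset_in: "g \<in> carrier G \<Longrightarrow> l_coset G g H \<in> lcosets\<^bsub>G\<^esub> H"
  unfolding LCOSETS_def by blast

lemma lcosets_cases: "C \<in> lcosets\<^bsub>G\<^esub> H \<Longrightarrow> (\<And>g. g \<in> carrier G \<Longrightarrow> C = l_coset G g H \<Longrightarrow> P) \<Longrightarrow> P"
  unfolding LCOSETS_def by blast

lemma pact_out: "C \<notin> lcosets\<^bsub>G\<^esub> H \<Longrightarrow> pact G H g f C = 0"
  by (simp add: pact_def)

lemma bas_out: "g \<in> carrier G \<Longrightarrow> C \<notin> lcosets\<^bsub>G\<^esub> H \<Longrightarrow> bas G H g C = 0"
  using lcoset_in[of g G H] by (auto simp: bas_def)

lemma pact_at:
  assumes "group G" "subgroup H G" "g \<in> carrier G" "d \<in> carrier G"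
  shows "pact G H g f (l_coset G d H) = f (l_coset G (inv\<^bsub>G\<^esub> g \<otimes>\<^bsub>G\<^esub> d) H)"
proof -
  interpret group G by fact
  have "H \<subseteq> carrier G" using assms(2) subgroup.subset by blast
  then show ?thesis using assms lcoset_in[of d G H]
    by (simp add: pact_def lcos_m_assoc)
qed

lemma coset_eq_mem:
  assumes "group G" "subgroup H G" "g \<in> carrier G" "d \<in> carrier G"
  shows "l_coset G d H = l_coset G g H \<longleftrightarrow> g \<in> l_coset G d H"
proof -
  interpret group G by fact
  show ?thesis using l_repr_independence[of g d H] lcos_self[of g H] assms by auto
qed

lemma pact_bas:
  assumes "group G" "subgroup H G" "g \<in> carrier G" "h \<in> carrier G"
  shows "pact G H g (bas G H h) = bas G H (g \<otimes>\<^bsub>G\<^esub> h)"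
proof
  interpret group G by fact
  have HG: "H \<subseteq> carrier G" using assms(2) subgroup.subset by blast
  fix C
  show "pact G H g (bas G H h) C = bas G H (g \<otimes>\<^bsub>G\<^esub> h) C"
  proof (cases "C \<in> lcosets\<^bsub>G\<^esub> H")
    case False then show ?thesis using bas_out[of "g \<otimes>\<^bsub>G\<^esub> h" G C H] assms
      by (simp add: pact_out)
  next
    case True
    then obtain d where d: "d \<in> carrier G" "C = l_coset G d H" by (rule lcosets_cases)
    have "l_coset G (inv\<^bsub>G\<^esub> g \<otimes>\<^bsub>G\<^esub> d) H = l_coset G h H \<longleftrightarrow> l_coset G d H = l_coset G (g \<otimes>\<^bsub>G\<^esub> h) H"
    proof
      assume a: "l_coset G (inv\<^bsub>G\<^esub> g \<otimes>\<^bsub>G\<^esub> d) H = l_coset G h H"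
      have "l_coset G d H = l_coset G g (l_coset G (inv\<^bsub>G\<^esub> g \<otimes>\<^bsub>G\<^esub> d) H)"
        using HG d assms by (simp add: lcos_m_assoc m_assoc[symmetric])
      also have "\<dots> = l_coset G (g \<otimes>\<^bsub>G\<^esub> h) H" using a HG assms by (simp add: lcos_m_assoc)
      finally show "l_coset G d H = l_coset G (g \<otimes>\<^bsub>G\<^esub> h) H" .
    next
      assume a: "l_coset G d H = l_coset G (g \<otimes>\<^bsub>G\<^esub> h) H"
      have "l_coset G (inv\<^bsub>G\<^esub> g \<otimes>\<^bsub>G\<^esub> d) H = l_coset G (inv\<^bsub>G\<^esub> g) (l_coset G d H)"
        using HG d assms by (simp add: lcos_m_assoc)
      also have "\<dots> = l_coset G h H" using a HG assms
        by (simp add: lcos_m_assoc m_assoc[symmetric])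
      finally show "l_coset G (inv\<^bsub>G\<^esub> g \<otimes>\<^bsub>G\<^esub> d) H = l_coset G h H" .
    qed
    then show ?thesis using d assms pact_at[OF assms(1,2,3) d(1)]
      by (simp add: bas_def)
  qed
qed

lemma pact_plus: "pact G H g (f1 + f2) = pact G H g f1 + pact G H g f2"
  by (auto simp: pact_def)

lemma pact_uminus: "pact G H g (- f) = - pact G H g f"
  by (auto simp: pact_def)

lemma rep_props:
  assumes "C \<in> lcosets\<^bsub>G\<^esub> H"
  shows "rep G H C \<in> carrier G" "l_coset G (rep G H C) H = C"
proof -
  have "\<exists>g. g \<in> carrier G \<and> C = l_coset G g H" using assms unfolding LCOSETS_def by blast
  then have "rep G H C \<in> carrier G \<and> C = l_coset G (rep G H C) H"
    unfolding rep_def by (rule someI_ex)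
  then show "rep G H C \<in> carrier G" "l_coset G (rep G H C) H = C" by auto
qed

lemma bas_rep: "C \<in> lcosets\<^bsub>G\<^esub> H \<Longrightarrow> bas G H (rep G H C) = (\<lambda>D. if D = C then 1 else 0)"
  unfolding bas_def using rep_props(2) by metis

lemma mod_half_iff: fixes M i j :: int assumes "0 < M"
  shows "(j mod (2*M) = i mod (2*M) \<or> j mod (2*M) = (i + M) mod (2*M)) \<longleftrightarrow> j mod M = i mod M"
proof
  assume "j mod (2*M) = i mod (2*M) \<or> j mod (2*M) = (i + M) mod (2*M)"
  then have "2*M dvd (j - i) \<or> 2*M dvd (j - (i + M))" by (simp only: mod_eq_dvd_iff)
  then have "M dvd (j - i) \<or> M dvd (j - (i + M))" using dvd_trans[OF dvd_triv_right[of M 2]] by blast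
  moreover have "M dvd (j - (i + M)) \<Longrightarrow> M dvd (j - i)"
  proof -
    assume "M dvd (j - (i + M))"
    then have "M dvd (j - (i + M)) + M" by (rule dvd_add) simp
    moreover have "j - (i + M) + M = j - i" by simp
    ultimately show "M dvd (j - i)" by simp
  qed
  ultimately have "M dvd (j - i)" by blast
  then show "j mod M = i mod M" by (simp only: mod_eq_dvd_iff)
next
  assume "j mod M = i mod M"
  then have "M dvd j - i" by (simp only: mod_eq_dvd_iff)
  then obtain q where q: "j - i = M * q" by (rule dvdE)
  show "j mod (2*M) = i mod (2*M) \<or> j mod (2*M) = (i + M) mod (2*M)"
  proof (cases "even q")
    case True
    then obtain r where "q = 2 * r" by (rule evenE)
    then have "j - i = (2*M) * r" using q by simp
    then have "2*M dvd j - i" by simp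
    then show ?thesis by (simp add: mod_eq_dvd_iff)
  next
    case False
    then obtain r where "q = 2 * r + 1" by (rule oddE)
    then have "j - (i + M) = (2*M) * r" using q by (simp add: algebra_simps)
    then have "2*M dvd j - (i + M)" by simp
    then show ?thesis by (simp add: mod_eq_dvd_iff)
  qed
qed

context DM begin

lemma e_minus_m[simp]: "e (i - int m) s = e (i + int m) s"
  by (simp add: e_eq_iff mod_eq_dvd_iff)

lemma HG_sub: "S \<subseteq> carrier G \<Longrightarrow> generate G S \<subseteq> carrier G"
  using gen_sub subgroup.subset by blast

lemma sub_triv: "subgroup (H_triv m) G"
  unfolding H_triv_eq by (rule group.subgroupI[OF group_G]) (auto simp: one_G)
lemma sub_sm: "subgroup (H_sm m) G"
  unfolding H_sm_def by (rule gen_sub) (simp add: spow_eq)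
lemma sub_t: "subgroup (H_t m) G"
  unfolding H_t_def by (rule gen_sub) (simp add: dtau_eq)
lemma sub_smt: "subgroup (H_smt m) G"
  unfolding H_smt_def by (rule gen_sub) (simp add: dtau_eq spow_eq)
lemma sub_s: "subgroup (H_s m) G"
  unfolding H_s_def by (rule gen_sub) (simp add: sg_eq)
lemma sub_s2: "subgroup (H_s2smt m) G"
  unfolding H_s2smt_def by (rule gen_sub) (simp add: dtau_eq spow_eq)

lemma lc_triv: "l_coset G (e i s) (H_triv m) = {e i s}"
  by (simp add: H_triv_eq l_coset_def)
lemma lc_sm: "l_coset G (e i s) (H_sm m) = {e i s, e (i + int m) s}"
  by (auto simp: H_sm_eq l_coset_def)
lemma lc_t: "l_coset G (e i s) (H_t m) = {e i s, e i (\<not> s)}"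
  by (auto simp: H_t_eq l_coset_def)
lemma lc_smt: "l_coset G (e i s) (H_smt m) = {e i s, e (i + int m) (\<not> s)}"
  by (auto simp: H_smt_eq l_coset_def)
lemma lc_s: "l_coset G (e i s) (H_s m) = range (\<lambda>j. e j s)"
proof -
  have "e j s \<in> (\<Union>h\<in>range (\<lambda>j. e j False). {e i s \<otimes>\<^bsub>G\<^esub> h})" for j
  proof -
    have "e j s = e i s \<otimes>\<^bsub>G\<^esub> e (if s then i - j else j - i) False" by simp
    then show ?thesis by blast
  qed
  then show ?thesis by (auto simp: H_s_eq l_coset_def)
qed

lemma lc_iff: "C \<in> lcosets\<^bsub>G\<^esub> H \<longleftrightarrow> (\<exists>i s. C = l_coset G (e i s) H)"
proof
  assume "C \<in> lcosets\<^bsub>G\<^esub> H"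
  then obtain g where g: "g \<in> carrier G" "C = l_coset G g H" by (rule lcosets_cases)
  then have "C = l_coset G (e (int (fst g)) (snd g)) H" using carrier_el by metis
  then show "\<exists>i s. C = l_coset G (e i s) H" by blast
next
  assume "\<exists>i s. C = l_coset G (e i s) H"
  then show "C \<in> lcosets\<^bsub>G\<^esub> H" using lcoset_in[OF el_carrier] by blast
qed

lemma lc_e: "l_coset G (e i s) H \<in> lcosets\<^bsub>G\<^esub> H"
  using lc_iff by blast

lemma ceq: "subgroup H G \<Longrightarrow> l_coset G (e i s) H = l_coset G (e j t) H \<longleftrightarrow> e j t \<in> l_coset G (e i s) H"
  by (rule coset_eq_mem[OF group_G]) auto

lemma eq_triv: "l_coset G (e i s) (H_triv m) = l_coset G (e j t) (H_triv m) \<longleftrightarrow> e i s = e j t"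
  by (auto simp: lc_triv)

lemma eq_sm: "l_coset G (e i s) (H_sm m) = l_coset G (e j t) (H_sm m) \<longleftrightarrow> s = t \<and> i mod int m = j mod int m"
proof -
  have "l_coset G (e i s) (H_sm m) = l_coset G (e j t) (H_sm m) \<longleftrightarrow> (e j t = e i s \<or> e j t = e (i + int m) s)"
    using ceq[OF sub_sm] by (simp add: lc_sm)
  also have "\<dots> \<longleftrightarrow> t = s \<and> (j mod (2 * int m) = i mod (2 * int m) \<or> j mod (2 * int m) = (i + int m) mod (2 * int m))"
    by (auto simp: e_eq_iff)
  also have "\<dots> \<longleftrightarrow> s = t \<and> i mod int m = j mod int m"
    using mod_half_iff[of "int m" j i] pos by auto
  finally show ?thesis .
qed

lemma eq_t: "l_coset G (e i s) (H_t m) = l_coset G (e j t) (H_t m) \<longleftrightarrow> i mod (2 * int m) = j mod (2 * int m)"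
proof -
  have "l_coset G (e i s) (H_t m) = l_coset G (e j t) (H_t m) \<longleftrightarrow> (e j t = e i s \<or> e j t = e i (\<not> s))"
    using ceq[OF sub_t] by (simp add: lc_t)
  then show ?thesis by (auto simp: e_eq_iff)
qed

definition ri :: "int \<Rightarrow> bool \<Rightarrow> int" where "ri i s = (if s then i + int m else i)"

lemma eq_smt: "l_coset G (e i s) (H_smt m) = l_coset G (e j t) (H_smt m) \<longleftrightarrow> ri i s mod (2 * int m) = ri j t mod (2 * int m)"
proof -
  have "l_coset G (e i s) (H_smt m) = l_coset G (e j t) (H_smt m) \<longleftrightarrow> (e j t = e i s \<or> e j t = e (i + int m) (\<not> s))"
    using ceq[OF sub_smt] by (simp add: lc_smt)
  also have "\<dots> \<longleftrightarrow> ri i s mod (2 * int m) = ri j t mod (2 * int m)"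
    by (cases s; cases t) (auto simp: e_eq_iff ri_def mod_eq_dvd_iff algebra_simps)
  finally show ?thesis .
qed

lemma eq_s: "l_coset G (e i s) (H_s m) = l_coset G (e j t) (H_s m) \<longleftrightarrow> s = t"
proof
  assume "l_coset G (e i s) (H_s m) = l_coset G (e j t) (H_s m)"
  then have "range (\<lambda>j. e j s) = range (\<lambda>j. e j t)" by (simp add: lc_s)
  moreover have "e 0 s \<in> range (\<lambda>j. e j s)" by (rule rangeI)
  ultimately have "e 0 s \<in> range (\<lambda>j. e j t)" by simp
  then obtain k where "e 0 s = e k t" by blast
  then show "s = t" by (simp add: e_eq_iff)
qed (simp add: lc_s)

end

lemma count_mod: fixes j :: int assumes "0 < M"
  shows "(\<Sum>i<M. (if int i mod int M = j mod int M then 1 else 0 :: int)) = 1"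
proof -
  have "(\<Sum>i<M. (if int i mod int M = j mod int M then 1 else 0 :: int))
      = (\<Sum>i<M. (if i = nat (j mod int M) then 1 else 0 :: int))"
  proof (rule sum.cong)
    fix i assume "i \<in> {..<M}"
    then have "int i mod int M = int i" by simp
    then show "(if int i mod int M = j mod int M then 1 else 0 :: int) = (if i = nat (j mod int M) then 1 else 0)"
      using assms by auto
  qed simp
  also have "\<dots> = 1" using assms by (simp add: nat_less_iff)
  finally show ?thesis .
qed

context DM begin

definition X1 :: "elt \<Rightarrow> int \<Rightarrow> bool \<Rightarrow> int" where "X1 x1 j s = x1 {e j s}"
definition X2 :: "elt \<Rightarrow> int \<Rightarrow> bool \<Rightarrow> int" where "X2 x2 j s = x2 (l_coset G (e j s) (H_sm m))"

lemma finite_carrier: "finite (carrier G)"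
proof -
  have "carrier G \<subseteq> {..<2*m} \<times> UNIV" unfolding carrier_G by auto
  then show ?thesis by (rule finite_subset) simp
qed

lemma finite_lc: "finite (lcosets\<^bsub>G\<^esub> H)"
proof -
  have "lcosets\<^bsub>G\<^esub> H = (\<lambda>g. l_coset G g H) ` carrier G" unfolding LCOSETS_def by auto
  then show ?thesis using finite_carrier by simp
qed

lemma e_ne_m[simp]: "e j t \<noteq> e (j + int m) t" "e (j + int m) t \<noteq> e j t"
  using pos by (auto simp: e_eq_iff mod_eq_dvd_iff zdvd_not_zless)

lemma ind_fst: "fst (ind_hom m H v x) D = (\<Sum>C\<in>lcosets\<^bsub>G\<^esub> H. x C * fst (tact m (rep G H C) v) D)"
  by (simp add: ind_hom_def fst_sum sum_fun_apply tsc_def)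
lemma ind_snd: "snd (ind_hom m H v x) D = (\<Sum>C\<in>lcosets\<^bsub>G\<^esub> H. x C * snd (tact m (rep G H C) v) D)"
  by (simp add: ind_hom_def snd_sum sum_fun_apply tsc_def)

lemma lc_triv_img: "lcosets\<^bsub>G\<^esub> (H_triv m) = (\<lambda>g. {g}) ` carrier G"
proof -
  have "l_coset G g (H_triv m) = {g}" if "g \<in> carrier G" for g
    using carrier_el[OF that] lc_triv by metis
  then show ?thesis unfolding LCOSETS_def by auto
qed

lemma rep_triv: "g \<in> carrier G \<Longrightarrow> rep G (H_triv m) {g} = g"
proof -
  assume g: "g \<in> carrier G"
  have in_lc: "{g} \<in> lcosets\<^bsub>G\<^esub> (H_triv m)" using g lc_triv_img by blast
  have r: "rep G (H_triv m) {g} \<in> carrier G" "l_coset G (rep G (H_triv m) {g}) (H_triv m) = {g}"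
    using rep_props[OF in_lc] by auto
  have "l_coset G (rep G (H_triv m) {g}) (H_triv m) = {rep G (H_triv m) {g}}"
    using carrier_el[OF r(1)] lc_triv by metis
  then show ?thesis using r(2) by simp
qed

lemma sum_triv:
  fixes x1 :: elt and f :: "nat \<times> bool \<Rightarrow> int"
  assumes "D \<subseteq> carrier G" "\<And>g. g \<in> carrier G \<Longrightarrow> f g = (if g \<in> D then 1 else 0)"
  shows "(\<Sum>C\<in>lcosets\<^bsub>G\<^esub> (H_triv m). x1 C * f (rep G (H_triv m) C)) = (\<Sum>g\<in>D. x1 {g})"
proof -
  have "(\<Sum>C\<in>lcosets\<^bsub>G\<^esub> (H_triv m). x1 C * f (rep G (H_triv m) C))
      = (\<Sum>g\<in>carrier G. x1 {g} * f (rep G (H_triv m) {g}))"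
    unfolding lc_triv_img by (subst sum.reindex) (auto simp: inj_on_def)
  also have "\<dots> = (\<Sum>g\<in>carrier G. (if g \<in> D then x1 {g} else 0))"
    by (rule sum.cong) (auto simp: rep_triv assms(2))
  also have "\<dots> = (\<Sum>g\<in>D. x1 {g})"
    using sum.inter_restrict[OF finite_carrier, of "\<lambda>g. x1 {g}" D, symmetric] assms(1)
    by (simp add: Int_absorb1)
  finally show ?thesis .
qed


lemma sum_lc_delta2:
  fixes x :: elt
  assumes "A1 \<in> lcosets\<^bsub>G\<^esub> H" "A2 \<in> lcosets\<^bsub>G\<^esub> H"
    "\<And>C. C \<in> lcosets\<^bsub>G\<^esub> H \<Longrightarrow> f C = (if C = A1 then 1 else 0) + (if C = A2 then 1 else 0)"
  shows "(\<Sum>C\<in>lcosets\<^bsub>G\<^esub> H. x C * f C) = x A1 + x A2"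
proof -
  have "(\<Sum>C\<in>lcosets\<^bsub>G\<^esub> H. x C * f C)
      = (\<Sum>C\<in>lcosets\<^bsub>G\<^esub> H. (if C = A1 then x C else 0) + (if C = A2 then x C else 0))"
    by (rule sum.cong) (auto simp: assms(3) algebra_simps)
  also have "\<dots> = x A1 + x A2"
    using assms(1,2) finite_lc by (simp add: sum.distrib)
  finally show ?thesis .
qed

lemma rc: "g \<in> carrier G \<Longrightarrow> g \<otimes>\<^bsub>G\<^esub> e 0 False = g"
  by (erule carrier_cases) simp

lemma pact_minus: "pact G' H g (f1 - f2) = pact G' H g f1 - pact G' H g f2"
  by (auto simp: pact_def)

lemma tact_v1: "g \<in> carrier G \<Longrightarrow> tact m g (v1 m) = (bas G (H_sm m) g, - bas G (H_t m) g)"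
  unfolding tact_def v1_def one_G
  by (simp add: pact_uminus pact_bas[OF group_G sub_sm] pact_bas[OF group_G sub_t] rc)

lemma tact_v2: "g \<in> carrier G \<Longrightarrow> tact m g (v2 m) =
   (bas G (H_sm m) g + bas G (H_sm m) (g \<otimes>\<^bsub>G\<^esub> e 2 False),
    - (bas G (H_t m) g + bas G (H_t m) (g \<otimes>\<^bsub>G\<^esub> e (int m) False)))"
  unfolding tact_def v2_def one_G spow_eq
  by (simp add: pact_uminus pact_plus pact_minus pact_bas[OF group_G sub_sm] pact_bas[OF group_G sub_t] rc)

lemma bas_at: "bas G H g D = (if D = l_coset G g H then 1 else 0)"
  by (simp add: bas_def)

lemma v3_fst: "fst (v3 m) (l_coset G (e j t) (H_sm m)) = 1"
proof -
  have "fst (v3 m) (l_coset G (e j t) (H_sm m))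
     = (\<Sum>i<m. (if int i mod int m = j mod int m then 1 else 0))"
    unfolding v3_def spow_eq dtau_eq
    by (cases t) (auto simp: sum_fun_apply bas_at eq_sm intro!: sum.cong)
  then show ?thesis using count_mod[OF pos] by simp
qed

lemma v3_snd: "snd (v3 m) (l_coset G (e j t) (H_t m)) = -1"
proof -
  have "snd (v3 m) (l_coset G (e j t) (H_t m))
     = - (\<Sum>i<2*m. (if int i mod int (2*m) = j mod int (2*m) then 1 else 0))"
    unfolding v3_def spow_eq
    by (auto simp: sum_fun_apply bas_at eq_t intro!: sum.cong)
  then show ?thesis using count_mod[OF n_pos] by simp
qed


lemma mod_shift_iff: "((i + c) mod M = j mod M) \<longleftrightarrow> (i mod M = (j - c) mod (M::int))"
  by (simp add: mod_eq_dvd_iff algebra_simps)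

lemma mod_sym_shift:
  "(j mod M = (i - c) mod M) \<longleftrightarrow> (i mod M = (j + c) mod (M::int))"
  "(j mod M = (i + c) mod M) \<longleftrightarrow> (i mod M = (j - c) mod (M::int))"
proof -
  have "M dvd j - (i - c) \<longleftrightarrow> M dvd i - (j + c)"
    using dvd_minus_iff[of M "j - (i - c)"] by (simp add: algebra_simps)
  then show "(j mod M = (i - c) mod M) \<longleftrightarrow> (i mod M = (j + c) mod (M::int))"
    by (simp add: mod_eq_dvd_iff)
  have "M dvd j - (i + c) \<longleftrightarrow> M dvd i - (j - c)"
    using dvd_minus_iff[of M "j - (i + c)"] by (simp add: algebra_simps)
  then show "(j mod M = (i + c) mod M) \<longleftrightarrow> (i mod M = (j - c) mod (M::int))"
    by (simp add: mod_eq_dvd_iff)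
qed

lemma not_both_mod: "\<not> (i mod (2 * int m) = j mod (2 * int m) \<and> (i + int m) mod (2 * int m) = j mod (2 * int m))"
proof
  assume "i mod (2 * int m) = j mod (2 * int m) \<and> (i + int m) mod (2 * int m) = j mod (2 * int m)"
  then have "2 * int m dvd i - j" "2 * int m dvd (i + int m) - j" by (simp_all add: mod_eq_dvd_iff)
  then have "2 * int m dvd ((i + int m) - j) - (i - j)" by (rule dvd_diff[rotated])
  then have "2 * int m dvd int m" by simp
  then have "2 * int m \<le> int m" using pos by (intro zdvd_imp_le) auto
  then show False using pos by simp
qed

lemma shiftm: "((i + int m) mod (2 * int m) = j mod (2 * int m)) \<longleftrightarrow> (i mod (2 * int m) = (j + int m) mod (2 * int m))"
proof -
  have eq: "i + int m - j = (i - (j + int m)) + 2 * int m" by simp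
  have "2 * int m dvd i + int m - j \<longleftrightarrow> 2 * int m dvd i - (j + int m)"
    unfolding eq by (rule dvd_add_left_iff) simp
  then show ?thesis by (simp add: mod_eq_dvd_iff)
qed

lemma ind_triv_fst:
  "fst (ind_hom m (H_triv m) (v1 m) x1) (l_coset G (e j t) (H_sm m)) = X1 x1 j t + X1 x1 (j + int m) t"
proof -
  let ?D = "l_coset G (e j t) (H_sm m)"
  have "fst (ind_hom m (H_triv m) (v1 m) x1) ?D
      = (\<Sum>C\<in>lcosets\<^bsub>G\<^esub> (H_triv m). x1 C * (\<lambda>g. bas G (H_sm m) g ?D) (rep G (H_triv m) C))"
    unfolding ind_fst by (rule sum.cong) (auto simp: tact_v1 rep_props)
  also have "\<dots> = (\<Sum>g\<in>?D. x1 {g})"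
  proof (rule sum_triv)
    show "?D \<subseteq> carrier G" by (simp add: lc_sm)
  next
    fix g assume "g \<in> carrier G"
    then obtain i s where g: "g = e i s" by (rule carrier_cases)
    show "bas G (H_sm m) g ?D = (if g \<in> ?D then 1 else 0)"
      unfolding bas_at g using ceq[OF sub_sm, of j t i s] by auto
  qed
  also have "\<dots> = X1 x1 j t + X1 x1 (j + int m) t"
    by (simp add: lc_sm X1_def)
  finally show ?thesis .
qed

lemma ind_triv_snd:
  "snd (ind_hom m (H_triv m) (v1 m) x1) (l_coset G (e j t) (H_t m)) = - (X1 x1 j False + X1 x1 j True)"
proof -
  let ?D = "l_coset G (e j t) (H_t m)"
  have "snd (ind_hom m (H_triv m) (v1 m) x1) ?D
      = - (\<Sum>C\<in>lcosets\<^bsub>G\<^esub> (H_triv m). x1 C * (\<lambda>g. bas G (H_t m) g ?D) (rep G (H_triv m) C))"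
    unfolding ind_snd sum_negf[symmetric] by (rule sum.cong) (auto simp: tact_v1 rep_props)
  also have "(\<Sum>C\<in>lcosets\<^bsub>G\<^esub> (H_triv m). x1 C * (\<lambda>g. bas G (H_t m) g ?D) (rep G (H_triv m) C)) = (\<Sum>g\<in>?D. x1 {g})"
  proof (rule sum_triv)
    show "?D \<subseteq> carrier G" by (simp add: lc_t)
  next
    fix g assume "g \<in> carrier G"
    then obtain i s where g: "g = e i s" by (rule carrier_cases)
    show "bas G (H_t m) g ?D = (if g \<in> ?D then 1 else 0)"
      unfolding bas_at g using ceq[OF sub_t, of j t i s] by auto
  qed
  also have "(\<Sum>g\<in>?D. x1 {g}) = X1 x1 j False + X1 x1 j True"
    by (cases t) (simp_all add: lc_t X1_def e_eq_iff)
  finally show ?thesis .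
qed

lemma ind_sm_fst:
  "fst (ind_hom m (H_sm m) (v2 m) x2) (l_coset G (e j t) (H_sm m))
     = X2 x2 j t + X2 x2 (if t then j + 2 else j - 2) t"
proof -
  let ?D = "l_coset G (e j t) (H_sm m)"
  let ?D2 = "l_coset G (e (if t then j + 2 else j - 2) t) (H_sm m)"
  have "fst (ind_hom m (H_sm m) (v2 m) x2) ?D = x2 ?D + x2 ?D2"
    unfolding ind_fst
  proof (rule sum_lc_delta2[OF lc_e lc_e])
    fix C assume C: "C \<in> lcosets\<^bsub>G\<^esub> (H_sm m)"
    obtain i s where r: "rep G (H_sm m) C = e i s" using rep_props(1)[OF C] by (rule carrier_cases)
    have Ceq: "C = l_coset G (e i s) (H_sm m)" using rep_props(2)[OF C] r by simp
    have 1: "bas G (H_sm m) (e i s) ?D = (if C = ?D then 1 else 0)"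
      unfolding bas_at Ceq by auto
    have 2: "bas G (H_sm m) (e i s \<otimes>\<^bsub>G\<^esub> e 2 False) ?D = (if C = ?D2 then 1 else 0)"
      unfolding bas_at Ceq using mod_sym_shift(1)[of j "int m" i 2] mod_sym_shift(2)[of j "int m" i 2]
      by (cases s; cases t) (auto simp: eq_sm)
    show "fst (tact m (rep G (H_sm m) C) (v2 m)) ?D = (if C = ?D then 1 else 0) + (if C = ?D2 then 1 else 0)"
      using 1 2 r by (simp add: tact_v2)
  qed
  then show ?thesis by (simp add: X2_def)
qed

lemma ind_sm_snd:
  "snd (ind_hom m (H_sm m) (v2 m) x2) (l_coset G (e j t) (H_t m))
     = - (X2 x2 j False + X2 x2 j True)"
proof -
  let ?D = "l_coset G (e j t) (H_t m)"
  let ?A1 = "l_coset G (e j False) (H_sm m)"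
  let ?A2 = "l_coset G (e j True) (H_sm m)"
  have "(\<Sum>C\<in>lcosets\<^bsub>G\<^esub> (H_sm m). x2 C * (- snd (tact m (rep G (H_sm m) C) (v2 m)) ?D)) = x2 ?A1 + x2 ?A2"
  proof (rule sum_lc_delta2[OF lc_e lc_e])
    fix C assume C: "C \<in> lcosets\<^bsub>G\<^esub> (H_sm m)"
    obtain i s where r: "rep G (H_sm m) C = e i s" using rep_props(1)[OF C] by (rule carrier_cases)
    have Ceq: "C = l_coset G (e i s) (H_sm m)" using rep_props(2)[OF C] r by simp
    have nb: "\<not> (j mod (2 * int m) = i mod (2 * int m) \<and> j mod (2 * int m) = (i + int m) mod (2 * int m))"
      using not_both_mod[of i j] by auto
    have half: "(j mod (2 * int m) = i mod (2 * int m) \<or> j mod (2 * int m) = (i + int m) mod (2 * int m))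
        \<longleftrightarrow> i mod int m = j mod int m"
      using mod_half_iff[where M="int m" and i=i and j=j] pos by auto
    have "- snd (tact m (e i s) (v2 m)) ?D
        = (if j mod (2 * int m) = i mod (2 * int m) then 1 else 0) + (if j mod (2 * int m) = (i + int m) mod (2 * int m) then 1 else 0)"
      by (cases s) (auto simp: tact_v2 bas_at eq_t)
    also have "\<dots> = (if i mod int m = j mod int m then 1 else 0)"
      using nb half by auto
    also have "\<dots> = (if C = ?A1 then 1 else 0) + (if C = ?A2 then 1 else 0)"
      unfolding Ceq by (cases s) (auto simp: eq_sm)
    finally show "- snd (tact m (rep G (H_sm m) C) (v2 m)) ?D = (if C = ?A1 then 1 else 0) + (if C = ?A2 then 1 else 0)"
      using r by simp
  qed
  then have "- (\<Sum>C\<in>lcosets\<^bsub>G\<^esub> (H_sm m). x2 C * snd (tact m (rep G (H_sm m) C) (v2 m)) ?D) = x2 ?A1 + x2 ?A2"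
    by (simp add: sum_negf[symmetric])
  then show ?thesis unfolding ind_snd X2_def by linarith
qed

lemma psi_fst: "fst (Psi m (x1, x2, x3)) (l_coset G (e j t) (H_sm m))
   = X1 x1 j t + X1 x1 (j + int m) t + X2 x2 j t + X2 x2 (if t then j + 2 else j - 2) t + x3"
  by (simp add: Psi_def tsc_def ind_triv_fst ind_sm_fst v3_fst)

lemma psi_snd: "snd (Psi m (x1, x2, x3)) (l_coset G (e j t) (H_t m))
   = - (X1 x1 j False + X1 x1 j True + X2 x2 j False + X2 x2 j True + x3)"
  by (simp add: Psi_def tsc_def ind_triv_snd ind_sm_snd v3_snd)

lemma psi_out_fst: "C \<notin> lcosets\<^bsub>G\<^esub> (H_sm m) \<Longrightarrow> fst (Psi m x) C = 0"
  by (cases x) (auto simp: Psi_def tsc_def ind_fst tact_def pact_out v3_def sum_fun_apply bas_out spow_eq dtau_eq)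

lemma psi_out_snd: "C \<notin> lcosets\<^bsub>G\<^esub> (H_t m) \<Longrightarrow> snd (Psi m x) C = 0"
  by (cases x) (auto simp: Psi_def tsc_def ind_snd tact_def pact_out v3_def sum_fun_apply bas_out spow_eq)

end

lemma const_step:
  assumes "\<And>c. f (c + 1) = f c"
  shows "f (c::int) = f 0"
proof (induction c rule: int_induct[where k=0])
  case base then show ?case by simp
next
  case (step1 i) then show ?case using assms[of i] by simp
next
  case (step2 i) then show ?case using assms[of "i - 1"] by simp
qed

lemma step_nat: assumes "\<And>c. f (c + d) = f c" shows "f (c + int k * d) = f (c::int)"
proof (induction k)
  case (Suc k)
  have "f (c + int (Suc k) * d) = f ((c + int k * d) + d)" by (simp add: algebra_simps)
  also have "\<dots> = f (c + int k * d)" by (rule assms)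
  finally show ?case using Suc by simp
qed simp

lemma step2_const:
  assumes "odd M" "\<And>c. f (c + int M) = f c" "\<And>c. f (c + 2) = f c"
  shows "f (c::int) = f 0"
proof (rule const_step)
  fix c
  obtain r where r: "M = 2 * r + 1" using assms(1) by (rule oddE)
  have "f (c + 1) = f ((c + 1) + int M)" by (rule assms(2)[symmetric])
  also have "(c + 1) + int M = c + int (r + 1) * 2" using r by simp
  also have "f (c + int (r + 1) * 2) = f c" by (rule step_nat) (rule assms(3))
  finally show "f (c + 1) = f c" .
qed

lemma sum_shift1:
  fixes f :: "int \<Rightarrow> 'a::comm_monoid_add"
  assumes "\<And>c. f (c + int M) = f c"
  shows "(\<Sum>i<M. f (int i + c + 1)) = (\<Sum>i<M. f (int i + c))"
proof (cases M)
  case 0 then show ?thesis by simp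
next
  case (Suc n)
  have "(\<Sum>i<M. f (int i + c + 1)) = (\<Sum>i<n. f (int (Suc i) + c)) + f (int n + c + 1)"
    using Suc by (simp add: algebra_simps)
  also have "f (int n + c + 1) = f (c + int M)" using Suc by (simp add: algebra_simps)
  also have "\<dots> = f (int 0 + c)" using assms by simp
  also have "(\<Sum>i<n. f (int (Suc i) + c)) + f (int 0 + c) = (\<Sum>i<M. f (int i + c))"
    using Suc by (simp only: sum.lessThan_Suc_shift) (simp add: add.commute)
  finally show ?thesis .
qed

lemma sum_shift:
  fixes f :: "int \<Rightarrow> 'a::comm_monoid_add"
  assumes "\<And>c. f (c + int M) = f c"
  shows "(\<Sum>i<M. f (int i + c)) = (\<Sum>i<M. f (int i))"
proof -
  have "(\<lambda>c. \<Sum>i<M. f (int i + c)) c = (\<lambda>c. \<Sum>i<M. f (int i + c)) 0"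
  proof (rule const_step)
    fix c
    show "(\<Sum>i<M. f (int i + (c + 1))) = (\<Sum>i<M. f (int i + c))"
      using sum_shift1[of f M c, OF assms] by (simp add: add.assoc)
  qed
  then show ?thesis by simp
qed

lemma sum_refl:
  fixes f :: "int \<Rightarrow> 'a::comm_monoid_add"
  assumes "\<And>c. f (c + int M) = f c"
  shows "(\<Sum>i<M. f (c - int i)) = (\<Sum>i<M. f (int i))"
proof -
  have "(\<Sum>i<M. f (c - int i)) = (\<Sum>i<M. f (c - int M + (int (M - Suc i) + 1)))"
    by (rule sum.cong) (auto simp: of_nat_diff algebra_simps)
  also have "\<dots> = (\<Sum>i<M. f (c - int M + (int i + 1)))"
    using sum.nat_diff_reindex[of "\<lambda>j. f (c - int M + (int j + 1))" M] by simp
  also have "\<dots> = (\<Sum>i<M. f (int i + (c - int M + 1)))" by (simp add: algebra_simps)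
  also have "\<dots> = (\<Sum>i<M. f (int i))" using sum_shift[of f M, OF assms] by blast
  finally show ?thesis .
qed

lemma tele:
  fixes f :: "int \<Rightarrow> int"
  shows "(\<Sum>j<n. (-1) ^ j * (f (c - 2 * int j) + f (c - 2 * int j - 2))) = f c - (-1) ^ n * f (c - 2 * int n)"
proof (induction n)
  case (Suc n)
  then show ?case by (simp add: algebra_simps)
qed simp

lemma alt_odd_k: "(\<Sum>j<2 * k + 1. (-1::int) ^ j) = 1"
proof (induction k)
  case (Suc k)
  have e: "(-1::int) ^ (2 * k) = 1" by (simp add: power_mult)
  have "(\<Sum>j<2 * Suc k + 1. (-1::int) ^ j) = (\<Sum>j<2 * k + 1. (-1::int) ^ j) + (-1) ^ (2 * k + 1) + (-1) ^ (2 * k + 2)"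
    by simp
  also have "\<dots> = 1" using Suc e by simp
  finally show ?case .
qed simp

lemma alt_odd: "odd n \<Longrightarrow> (\<Sum>j<n. (-1::int) ^ j) = 1"
  using alt_odd_k by (metis oddE)

lemma odd_sum: "(\<And>i. i < (n::nat) \<Longrightarrow> odd (g i :: int)) \<Longrightarrow> odd (\<Sum>i<n. g i) \<longleftrightarrow> odd n"
  by (induction n) auto

context DM begin

definition EqI :: "elt \<Rightarrow> elt \<Rightarrow> int \<Rightarrow> int \<Rightarrow> bool \<Rightarrow> bool" where
  "EqI x1 x2 x3 j t \<longleftrightarrow> X1 x1 j t + X1 x1 (j + int m) t + X2 x2 j t + X2 x2 (if t then j + 2 else j - 2) t + x3 = 0"
definition EqII :: "elt \<Rightarrow> elt \<Rightarrow> int \<Rightarrow> int \<Rightarrow> bool" where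
  "EqII x1 x2 x3 j \<longleftrightarrow> X1 x1 j False + X1 x1 j True + X2 x2 j False + X2 x2 j True + x3 = 0"

lemma Psi_zero_iff: "Psi m (x1, x2, x3) = 0 \<longleftrightarrow> (\<forall>j t. EqI x1 x2 x3 j t) \<and> (\<forall>j. EqII x1 x2 x3 j)"
proof
  assume z: "Psi m (x1, x2, x3) = 0"
  have "EqI x1 x2 x3 j t" for j t
    using arg_cong[OF z, of "\<lambda>p. fst p (l_coset G (e j t) (H_sm m))"] by (simp add: psi_fst EqI_def)
  moreover have "EqII x1 x2 x3 j" for j
    using arg_cong[OF z, of "\<lambda>p. snd p (l_coset G (e j False) (H_t m))"] by (simp add: psi_snd EqII_def)
  ultimately show "(\<forall>j t. EqI x1 x2 x3 j t) \<and> (\<forall>j. EqII x1 x2 x3 j)" by blast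
next
  assume a: "(\<forall>j t. EqI x1 x2 x3 j t) \<and> (\<forall>j. EqII x1 x2 x3 j)"
  have f: "fst (Psi m (x1, x2, x3)) C = 0" for C
  proof (cases "C \<in> lcosets\<^bsub>G\<^esub> (H_sm m)")
    case True
    then obtain j t where "C = l_coset G (e j t) (H_sm m)" using lc_iff by blast
    then show ?thesis using a by (simp add: psi_fst EqI_def)
  qed (simp add: psi_out_fst)
  have s: "snd (Psi m (x1, x2, x3)) C = 0" for C
  proof (cases "C \<in> lcosets\<^bsub>G\<^esub> (H_t m)")
    case True
    then obtain j t where "C = l_coset G (e j t) (H_t m)" using lc_iff by blast
    then show ?thesis using a by (simp add: psi_snd EqII_def)
  qed (simp add: psi_out_snd)
  show "Psi m (x1, x2, x3) = 0"
    using f s by (simp add: prod_eq_iff fun_eq_iff)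
qed

lemma X1_per[simp]: "X1 x1 (j + 2 * int m) s = X1 x1 j s" "X1 x1 (j mod (2 * int m)) s = X1 x1 j s"
  by (simp_all add: X1_def)

lemma X2_per[simp]: "X2 x2 (j + int m) s = X2 x2 j s" "X2 x2 (j mod int m) s = X2 x2 j s"
proof -
  have "l_coset G (e (j + int m) s) (H_sm m) = l_coset G (e j s) (H_sm m)"
    "l_coset G (e (j mod int m) s) (H_sm m) = l_coset G (e j s) (H_sm m)"
    by (simp_all only: eq_sm) simp_all
  then show "X2 x2 (j + int m) s = X2 x2 j s" "X2 x2 (j mod int m) s = X2 x2 j s"
    by (simp_all add: X2_def)
qed

lemma X2_per2[simp]: "X2 x2 (j + 2 * int m) s = X2 x2 j s" "X2 x2 (j mod (2 * int m)) s = X2 x2 j s"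
  by (simp_all add: X2_def)

lemma X2_perm: "X2 x2 (j - int m) s = X2 x2 j s"
  using X2_per(1)[of x2 "j - int m" s] by simp

end

locale DMO2 = DMO
begin

definition R :: int where "R = (int m - 1) div 2"
lemma M_eq: "int m = 2 * R + 1"
proof -
  obtain k where k: "m = 2 * k + 1" using odd by (rule oddE)
  then show ?thesis unfolding R_def by simp
qed

definition S0 :: "elt \<Rightarrow> int" where "S0 x2 = (\<Sum>i<m. X2 x2 (int i) False)"
definition S1 :: "elt \<Rightarrow> int" where "S1 x2 = (\<Sum>i<m. X2 x2 (int i) True)"
definition kk :: "elt \<Rightarrow> int" where "kk x2 = X2 x2 0 False - X2 x2 2 True"

lemma K_lemma:
  assumes I: "\<And>j t. EqI x1 x2 x3 j t" and II: "\<And>j. EqII x1 x2 x3 j"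
  shows "X2 x2 (c - 2) False - X2 x2 c True = kk x2"
proof -
  let ?d = "\<lambda>c. X2 x2 c False - X2 x2 (c + 2) True"
  have step: "?d (c + 2) = ?d c" for c
  proof -
    have a: "EqI x1 x2 x3 (c + 2) False" "EqI x1 x2 x3 (c + 2) True" "EqII x1 x2 x3 (c + 2)" "EqII x1 x2 x3 (c + 2 + int m)"
      using I II by auto
    then show ?thesis unfolding EqI_def EqII_def by simp
  qed
  have per: "?d (c + int m) = ?d c" for c
    using X2_per(1)[of x2 c False] X2_per(1)[of x2 "c + 2" True] by (simp add: algebra_simps)
  have "?d (c - 2) = ?d 0" by (rule step2_const[OF odd per step])
  then show ?thesis by (simp add: kk_def)
qed


lemma S1_eq:
  assumes I: "\<And>j t. EqI x1 x2 x3 j t" and II: "\<And>j. EqII x1 x2 x3 j"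
  shows "S1 x2 = S0 x2 - int m * kk x2"
proof -
  have "S1 x2 = (\<Sum>i<m. X2 x2 (int i + (-2)) False - kk x2)"
    unfolding S1_def using K_lemma[OF I II] by (intro sum.cong) (auto simp: algebra_simps)
  also have "\<dots> = (\<Sum>i<m. X2 x2 (int i + (-2)) False) - int m * kk x2"
    by (simp add: sum_subtractf)
  also have "(\<Sum>i<m. X2 x2 (int i + (-2)) False) = S0 x2"
    unfolding S0_def by (rule sum_shift[of "\<lambda>c. X2 x2 c False"]) simp
  finally show ?thesis .
qed

lemma X1T_lemma:
  assumes I: "\<And>j t. EqI x1 x2 x3 j t" and II: "\<And>j. EqII x1 x2 x3 j"
  shows "X1 x1 c True - X1 x1 (c + int m) False = kk x2"
  using I[of c False] II[of c] K_lemma[OF I II, of c] unfolding EqI_def EqII_def by simp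

lemma sum_split: "(\<Sum>i<(a::nat)+b. g i) = (\<Sum>i<a. g i) + (\<Sum>i<b. (g (a + i) :: int))"
  by (induction b) simp_all

lemma sum_2m: "(\<Sum>i<2*m. g (int i)) = (\<Sum>i<m. g (int i) + (g (int i + int m) :: int))"
proof -
  have "(\<Sum>i<2*m. g (int i)) = (\<Sum>i<m + m. g (int i))" by (simp add: mult_2)
  also have "\<dots> = (\<Sum>i<m. g (int i)) + (\<Sum>i<m. g (int (m + i)))" by (rule sum_split)
  also have "\<dots> = (\<Sum>i<m. g (int i) + g (int i + int m))" by (simp add: sum.distrib add.commute)
  finally show ?thesis .
qed

lemma sumX1F:
  assumes I: "\<And>j t. EqI x1 x2 x3 j t"
  shows "(\<Sum>i<2*m. X1 x1 (int i) False) = - 2 * S0 x2 - int m * x3"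
proof -
  have "(\<Sum>i<2*m. X1 x1 (int i) False) = (\<Sum>i<m. - X2 x2 (int i) False - X2 x2 (int i + (-2)) False - x3)"
  proof -
    have pt: "X1 x1 (int i) False + X1 x1 (int i + int m) False = - X2 x2 (int i) False - X2 x2 (int i + (-2)) False - x3" for i
      using I[of "int i" False] unfolding EqI_def by simp
    show ?thesis by (simp only: sum_2m[of "\<lambda>c. X1 x1 c False"] pt)
  qed
  also have "\<dots> = - (\<Sum>i<m. X2 x2 (int i) False) - (\<Sum>i<m. X2 x2 (int i + (-2)) False) - int m * x3"
    by (simp add: sum_subtractf sum_negf)
  also have "(\<Sum>i<m. X2 x2 (int i + (-2)) False) = S0 x2"
    unfolding S0_def by (rule sum_shift[of "\<lambda>c. X2 x2 c False"]) simp
  finally show ?thesis by (simp add: S0_def)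
qed

definition pA :: "elt \<Rightarrow> int \<Rightarrow> int" where "pA A j = A (l_coset G (e j False) (H_smt m))"
definition qB0 :: "elt \<Rightarrow> int" where "qB0 B = B (l_coset G (e 0 False) (H_s m))"
definition qB1 :: "elt \<Rightarrow> int" where "qB1 B = B (l_coset G (e 0 True) (H_s m))"
definition kB :: "elt \<Rightarrow> int" where "kB B = qB0 B - qB1 B"
definition SP :: "elt \<Rightarrow> int" where "SP A = (\<Sum>i<2*m. pA A (int i))"
definition R1 :: "elt \<Rightarrow> elt \<Rightarrow> int" where "R1 A B = SP A + (2*R+1)*(2*R) * kB B"
definition R2 :: "elt \<Rightarrow> int" where "R2 B = qB0 B + (2*R*R + 2*R) * kB B"
definition S0i :: "elt \<Rightarrow> elt \<Rightarrow> int" where "S0i A B = - (R+1) * R1 A B + (2*R+1) * R2 B"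
definition x3i :: "elt \<Rightarrow> elt \<Rightarrow> int" where "x3i A B = - (2*R+1) * R1 A B + 4*R * R2 B"
definition Tf :: "elt \<Rightarrow> elt \<Rightarrow> int \<Rightarrow> int" where
  "Tf A B c = - (pA A c + pA A (c + int m)) - x3i A B + 2 * S0i A B - 2*R * kB B"
definition Aalt :: "elt \<Rightarrow> elt \<Rightarrow> int \<Rightarrow> int" where
  "Aalt A B c = (\<Sum>j<m. (-1) ^ j * Tf A B (c - 2 * int j))"
definition w0i :: "elt \<Rightarrow> elt \<Rightarrow> int \<Rightarrow> int" where "w0i A B c = Aalt A B c div 2"
definition w1i :: "elt \<Rightarrow> elt \<Rightarrow> int \<Rightarrow> int" where "w1i A B c = w0i A B (c - 2) - kB B"
definition X1Fi :: "elt \<Rightarrow> elt \<Rightarrow> int \<Rightarrow> int" where "X1Fi A B c = pA A c - S0i A B + R * kB B"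
definition X1Ti :: "elt \<Rightarrow> elt \<Rightarrow> int \<Rightarrow> int" where
  "X1Ti A B c = - x3i A B - X1Fi A B c - w0i A B c - w1i A B c"

lemma pA_per[simp]: "pA A (j + 2 * int m) = pA A j" "pA A (j mod (2 * int m)) = pA A j"
  "pA A (j + int m + int m) = pA A j"
  by (simp_all add: pA_def)

lemma Tf_per: "Tf A B (c + int m) = Tf A B c"
proof -
  have "pA A (c + int m + int m) = pA A c" by (rule pA_per(3))
  then show ?thesis unfolding Tf_def by linarith
qed

lemma Aalt_per: "Aalt A B (c + int m) = Aalt A B c"
proof -
  have "Tf A B (c + int m - 2 * int j) = Tf A B (c - 2 * int j)" for j
  proof -
    have "c + int m - 2 * int j = (c - 2 * int j) + int m" by simp
    then show ?thesis using Tf_per[of A B "c - 2 * int j"] by (simp add: algebra_simps)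
  qed
  then show ?thesis unfolding Aalt_def by simp
qed

lemma w0i_per: "w0i A B (c + int m) = w0i A B c"
  by (simp add: w0i_def Aalt_per)
lemma w1i_per: "w1i A B (c + int m) = w1i A B c"
  using w0i_per[of A B "c - 2"] by (simp add: w1i_def algebra_simps)

lemma sumT: "(\<Sum>c<m. Tf A B (int c)) = 2 * S0i A B"
proof -
  have "(\<Sum>c<m. Tf A B (int c)) = - (\<Sum>c<m. pA A (int c) + pA A (int c + int m)) - int m * (x3i A B - 2 * S0i A B + 2*R * kB B)"
    unfolding Tf_def by (simp add: sum_subtractf sum_negf sum.distrib algebra_simps)
  also have "(\<Sum>c<m. pA A (int c) + pA A (int c + int m)) = SP A"
    unfolding SP_def sum_2m ..
  finally have "(\<Sum>c<m. Tf A B (int c)) = - SP A - int m * (x3i A B - 2 * S0i A B + 2*R * kB B)" .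
  also have "\<dots> = 2 * S0i A B"
    unfolding M_eq S0i_def x3i_def R1_def R2_def by (simp add: algebra_simps)
  finally show ?thesis .
qed

lemma Aalt_tele: "Aalt A B c + Aalt A B (c - 2) = 2 * Tf A B c"
proof -
  have "Aalt A B c + Aalt A B (c - 2) = (\<Sum>j<m. (-1) ^ j * (Tf A B (c - 2 * int j) + Tf A B (c - 2 * int j - 2)))"
  proof -
    have pt: "(-1) ^ j * Tf A B (c - 2 * int j) + (-1) ^ j * Tf A B (c - 2 - 2 * int j)
        = (-1) ^ j * (Tf A B (c - 2 * int j) + Tf A B (c - 2 * int j - 2))" for j :: nat
    proof -
      have "Tf A B (c - 2 - 2 * int j) = Tf A B (c - 2 * int j - 2)"
        by (rule arg_cong[where f="Tf A B"]) simp
      then show ?thesis by (simp add: distrib_left)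
    qed
    show ?thesis unfolding Aalt_def sum.distrib[symmetric] pt ..
  qed
  also have "\<dots> = Tf A B c - (-1) ^ m * Tf A B (c - 2 * int m)" by (rule tele)
  also have "Tf A B (c - 2 * int m) = Tf A B c"
    using Tf_per[of A B "c - 2 * int m"] Tf_per[of A B "c - int m"] by simp
  finally show ?thesis using odd by simp
qed

lemma sumA: "(\<Sum>c<m. Aalt A B (int c)) = 2 * S0i A B"
proof -
  have sh: "(\<Sum>c<m. Tf A B (int c - 2 * int j)) = 2 * S0i A B" for j
  proof -
    have "(\<Sum>c<m. Tf A B (int c + (- 2 * int j))) = (\<Sum>c<m. Tf A B (int c))"
      by (rule sum_shift) (rule Tf_per)
    then show ?thesis using sumT by simp
  qed
  have "(\<Sum>c<m. Aalt A B (int c)) = (\<Sum>j<m. (-1) ^ j * (\<Sum>c<m. Tf A B (int c - 2 * int j)))"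
    unfolding Aalt_def by (subst sum.swap) (simp add: sum_distrib_left)
  also have "\<dots> = (\<Sum>j<m. (-1) ^ j * (2 * S0i A B))"
    using sh by simp
  also have "\<dots> = 2 * S0i A B" using alt_odd[OF odd] by (simp add: sum_distrib_right[symmetric])
  finally show ?thesis .
qed

lemma Aalt_even: "even (Aalt A B c)"
proof -
  let ?E = "\<lambda>c. even (Aalt A B c)"
  have st: "?E (c + 2) = ?E c" for c
    using Aalt_tele[of A B "c + 2"] by (metis add_diff_cancel_right' even_add even_mult_iff even_numeral)
  have per: "?E (c + int m) = ?E c" for c using Aalt_per by simp
  have all: "?E c = ?E 0" for c by (rule step2_const[OF odd per st])
  show ?thesis
  proof (rule ccontr)
    assume "\<not> ?E c"
    then have "\<And>i. i < m \<Longrightarrow> odd (Aalt A B (int i))" using all by metis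
    then have "odd (\<Sum>c<m. Aalt A B (int c))" using odd_sum[of m "\<lambda>i. Aalt A B (int i)"] odd by blast
    then show False using sumA by simp
  qed
qed

lemma W_lemma: "w0i A B c + w0i A B (c - 2) = Tf A B c"
proof -
  have "2 * w0i A B c = Aalt A B c" "2 * w0i A B (c - 2) = Aalt A B (c - 2)"
    using Aalt_even unfolding w0i_def by auto
  then show ?thesis using Aalt_tele[of A B c] by linarith
qed

lemma sum_w0i: "(\<Sum>i<m. w0i A B (int i)) = S0i A B"
proof -
  have "(\<Sum>i<m. w0i A B (int i)) + (\<Sum>i<m. w0i A B (int i + (-2))) = (\<Sum>i<m. Tf A B (int i))"
    unfolding sum.distrib[symmetric] using W_lemma by (intro sum.cong) auto
  moreover have "(\<Sum>i<m. w0i A B (int i + (-2))) = (\<Sum>i<m. w0i A B (int i))"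
    by (rule sum_shift) (rule w0i_per)
  ultimately show ?thesis using sumT by simp
qed

end

lemma per_int:
  assumes "\<And>c. f (c + d) = f c"
  shows "f (c + k * d) = f (c::int)"
proof (induction k rule: int_induct[where k=0])
  case base then show ?case by simp
next
  case (step1 i)
  have "f (c + (i + 1) * d) = f ((c + i * d) + d)" by (simp add: algebra_simps)
  then show ?case using assms step1 by simp
next
  case (step2 i)
  have "f (c + (i - 1) * d) = f ((c + (i - 1) * d) + d)" using assms by simp
  also have "(c + (i - 1) * d) + d = c + i * d" by (simp add: algebra_simps)
  finally show ?case using step2 by simp
qed

lemma per_mod:
  assumes "\<And>c. f (c + d) = f c"
  shows "f (j mod d) = f (j::int)"
proof -
  have "f (j mod d + (j div d) * d) = f (j mod d)" by (rule per_int[of f d, OF assms])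
  then show ?thesis by (simp add: mod_div_mult_eq)
qed

context DMO2 begin

lemma fst_e: "int (fst (e j s)) = j mod (2 * int m)"
  using pos by (simp add: e_def el_def)
lemma snd_e[simp]: "snd (e j s) = s"
  by (simp add: e_def el_def)

definition pf :: "elt \<Rightarrow> elt \<Rightarrow> int \<Rightarrow> int" where
  "pf x1 x2 j = X1 x1 j False + S0 x2 - R * kk x2"
definition q0 :: "elt \<Rightarrow> int \<Rightarrow> int" where
  "q0 x2 x3 = (2*R+1) * S0 x2 - (2*R*R + 2*R) * kk x2 - (R + 1) * x3"
definition Phi1 :: "elt \<Rightarrow> elt \<Rightarrow> elt" where
  "Phi1 x1 x2 = (\<lambda>C. if C \<in> lcosets\<^bsub>G\<^esub> (H_smt m)
     then (\<Sum>g\<in>C. if snd g then 0 else pf x1 x2 (int (fst g))) else 0)"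
definition Phi2 :: "elt \<Rightarrow> int \<Rightarrow> elt" where
  "Phi2 x2 x3 = (\<lambda>C. if C \<in> lcosets\<^bsub>G\<^esub> (H_s m)
     then (if e 0 False \<in> C then q0 x2 x3 else q0 x2 x3 - kk x2) else 0)"
definition phi :: "(elt \<times> elt \<times> int) \<times> elt \<Rightarrow> elt \<times> elt \<times> elt" where
  "phi = (\<lambda>((x1, x2, x3), c). (Phi1 x1 x2, Phi2 x2 x3, c))"

definition x1i :: "elt \<Rightarrow> elt \<Rightarrow> elt" where
  "x1i A B = (\<lambda>C. if C \<in> lcosets\<^bsub>G\<^esub> (H_triv m)
     then (\<Sum>g\<in>C. if snd g then X1Ti A B (int (fst g)) else X1Fi A B (int (fst g))) else 0)"
definition x2i :: "elt \<Rightarrow> elt \<Rightarrow> elt" where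
  "x2i A B = (\<lambda>C. if C \<in> lcosets\<^bsub>G\<^esub> (H_sm m)
     then (\<Sum>g\<in>C. if fst g < m then (if snd g then w1i A B (int (fst g)) else w0i A B (int (fst g))) else 0) else 0)"
definition psi :: "elt \<times> elt \<times> elt \<Rightarrow> (elt \<times> elt \<times> int) \<times> elt" where
  "psi = (\<lambda>(A, B, c). ((x1i A B, x2i A B, x3i A B), c))"

lemma pf_per: "pf x1 x2 (j mod (2 * int m)) = pf x1 x2 j"
  by (simp add: pf_def)

lemma Phi1_at: "Phi1 x1 x2 (l_coset G (e j s) (H_smt m)) = pf x1 x2 (ri j s)"
proof -
  have ne: "e j s \<noteq> e (j + int m) (\<not> s)" by (simp add: e_eq_iff)
  have "pf x1 x2 ((j + int m) mod (2 * int m)) = pf x1 x2 (j + int m)" by (rule pf_per)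
  then show ?thesis using lc_e[where H="H_smt m" and i=j and s=s] ne pf_per[of x1 x2 j]
    by (cases s) (simp_all add: Phi1_def lc_smt fst_e ri_def)
qed

lemma Phi2_at: "Phi2 x2 x3 (l_coset G (e j s) (H_s m)) = (if s then q0 x2 x3 - kk x2 else q0 x2 x3)"
proof -
  have "e 0 False \<in> range (\<lambda>j. e j s) \<longleftrightarrow> \<not> s"
  proof
    assume "e 0 False \<in> range (\<lambda>j. e j s)"
    then obtain k where "e 0 False = e k s" by blast
    then show "\<not> s" by (simp add: e_eq_iff)
  next
    assume "\<not> s"
    then show "e 0 False \<in> range (\<lambda>j. e j s)" using rangeI[of "\<lambda>j. e j False" 0] by simp
  qed
  then show ?thesis using lc_e[where H="H_s m" and i=j and s=s] by (simp add: Phi2_def lc_s)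
qed

lemma per2m: "(\<And>c. f (c + int m) = f c) \<Longrightarrow> f (c + 2 * int m) = f (c::int)"
proof -
  assume a: "\<And>c. f (c + int m) = f c"
  have e: "c + 2 * int m = (c + int m) + int m" by simp
  show ?thesis by (subst e) (simp only: a)
qed

lemma w0i_mod: "w0i A B (j mod (2 * int m)) = w0i A B j"
  by (rule per_mod) (rule per2m, rule w0i_per)
lemma w1i_mod: "w1i A B (j mod (2 * int m)) = w1i A B j"
  by (rule per_mod) (rule per2m, rule w1i_per)
lemma w0i_modm: "w0i A B (j mod int m) = w0i A B j"
  by (rule per_mod) (rule w0i_per)
lemma w1i_modm: "w1i A B (j mod int m) = w1i A B j"
  by (rule per_mod) (rule w1i_per)
lemma X1Fi_mod: "X1Fi A B (j mod (2 * int m)) = X1Fi A B j"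
  by (simp add: X1Fi_def)
lemma X1Ti_mod: "X1Ti A B (j mod (2 * int m)) = X1Ti A B j"
  by (simp add: X1Ti_def X1Fi_mod w0i_mod w1i_mod)

lemma x1i_at: "x1i A B {e j s} = (if s then X1Ti A B j else X1Fi A B j)"
  using lc_e[where H="H_triv m" and i=j and s=s] by (simp add: x1i_def lc_triv fst_e X1Fi_mod X1Ti_mod)

lemma mod_shift_m: "(j + int m) mod (2 * int m) = (if j mod (2 * int m) < int m then j mod (2 * int m) + int m else j mod (2 * int m) - int m)"
proof -
  let ?a = "j mod (2 * int m)"
  have a: "0 \<le> ?a" "?a < 2 * int m" using pos by simp_all
  have "(j + int m) mod (2 * int m) = (?a + int m) mod (2 * int m)" by (rule mod_add_left_eq[symmetric])
  also have "\<dots> = (if ?a < int m then ?a + int m else ?a - int m)"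
  proof (cases "?a < int m")
    case True then show ?thesis using a by simp
  next
    case False
    have "(?a + int m) mod (2 * int m) = ((?a - int m) + 2 * int m) mod (2 * int m)" by (simp add: algebra_simps)
    also have "\<dots> = (?a - int m) mod (2 * int m)" by (rule mod_add_self2)
    also have "\<dots> = ?a - int m" using a False by simp
    finally show ?thesis using False by simp
  qed
  finally show ?thesis .
qed

lemma x2i_at: "x2i A B (l_coset G (e j s) (H_sm m)) = (if s then w1i A B j else w0i A B j)"
proof -
  let ?a = "j mod (2 * int m)"
  let ?w = "\<lambda>c. if s then w1i A B c else w0i A B c"
  have a: "0 \<le> ?a" "?a < 2 * int m" using pos by simp_all
  have f1: "fst (e j s) < m \<longleftrightarrow> ?a < int m" using fst_e[of j s] by linarith
  have fe: "int (fst (e (j + int m) s)) = (if ?a < int m then ?a + int m else ?a - int m)"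
    by (simp only: fst_e mod_shift_m)
  have cv: "fst (e (j + int m) s) < m \<longleftrightarrow> int (fst (e (j + int m) s)) < int m" by simp
  have f2: "fst (e (j + int m) s) < m \<longleftrightarrow> \<not> ?a < int m"
  proof (cases "?a < int m")
    case True
    then have "int (fst (e (j + int m) s)) = ?a + int m" using fe by simp
    then show ?thesis using True a(1) cv by linarith
  next
    case False
    then have "int (fst (e (j + int m) s)) = ?a - int m" using fe by simp
    then show ?thesis using False a(2) cv by linarith
  qed
  have wa: "?w ?a = ?w j" by (simp add: w0i_mod w1i_mod)
  have wb: "?w ((j + int m) mod (2 * int m)) = ?w j"
    using w0i_mod[of A B "j + int m"] w1i_mod[of A B "j + int m"] w0i_per[of A B j] w1i_per[of A B j] by simp
  have "x2i A B (l_coset G (e j s) (H_sm m))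
      = (if fst (e j s) < m then ?w (int (fst (e j s))) else 0) + (if fst (e (j + int m) s) < m then ?w (int (fst (e (j + int m) s))) else 0)"
    using lc_e[where H="H_sm m" and i=j and s=s] by (simp add: x2i_def lc_sm)
  also have "\<dots> = ?w j" using f1 f2 wa wb by (cases s; simp add: fst_e)
  finally show ?thesis .
qed

end

context DMO2 begin

abbreviation "Mset \<equiv> E_mod m \<times> perm_mod G (H_s2smt m)"
abbreviation "Nset \<equiv> perm_mod G (H_smt m) \<times> perm_mod G (H_s m) \<times> perm_mod G (H_s2smt m)"

lemma X1_x1i: "X1 (x1i A B) j s = (if s then X1Ti A B j else X1Fi A B j)"
  by (simp add: X1_def x1i_at)
lemma X2_x2i: "X2 (x2i A B) j s = (if s then w1i A B j else w0i A B j)"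
  by (simp add: X2_def x2i_at)

lemma psi_in: "psi (A, B, c) \<in> Mset" if "(A, B, c) \<in> Nset"
proof -
  have EI: "EqI (x1i A B) (x2i A B) (x3i A B) j t" for j t
  proof -
    have W: "w0i A B j + w0i A B (j - 2) = Tf A B j" by (rule W_lemma)
    have w1a: "w1i A B j = w0i A B (j - 2) - kB B" by (simp add: w1i_def)
    have w1b: "w1i A B (j + 2) = w0i A B j - kB B" by (simp add: w1i_def)
    have pm: "w0i A B (j + int m) = w0i A B j" "w1i A B (j + int m) = w1i A B j"
      by (rule w0i_per, rule w1i_per)
    show ?thesis
      using W w1a w1b pm unfolding EqI_def X1_x1i X2_x2i
      by (cases t) (simp_all add: X1Ti_def X1Fi_def Tf_def)
  qed
  have EII: "EqII (x1i A B) (x2i A B) (x3i A B) j" for j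
    unfolding EqII_def X1_x1i X2_x2i by (simp add: X1Ti_def)
  have "Psi m (x1i A B, x2i A B, x3i A B) = 0"
    using EI EII Psi_zero_iff by blast
  moreover have "x1i A B \<in> perm_mod G (H_triv m)" by (simp add: perm_mod_def x1i_def)
  moreover have "x2i A B \<in> perm_mod G (H_sm m)" by (simp add: perm_mod_def x2i_def)
  ultimately show ?thesis using that by (simp add: psi_def E_mod_def R_mod_def)
qed

lemma alg1: "(2*R+1) * S0i A B - (2*R*R + 2*R) * kB B - (R + 1) * x3i A B = qB0 B"
  unfolding S0i_def x3i_def R1_def R2_def by (simp add: algebra_simps)

lemma phi_psi: "phi (psi (A, B, c)) = (A, B, c)" if "(A, B, c) \<in> Nset"
proof -
  have A0: "A C = 0" if "C \<notin> lcosets\<^bsub>G\<^esub> (H_smt m)" for C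
    using \<open>(A, B, c) \<in> Nset\<close> that by (auto simp: perm_mod_def)
  have B0: "B C = 0" if "C \<notin> lcosets\<^bsub>G\<^esub> (H_s m)" for C
    using \<open>(A, B, c) \<in> Nset\<close> that by (auto simp: perm_mod_def)
  have S: "S0 (x2i A B) = S0i A B"
    unfolding S0_def X2_x2i using sum_w0i by simp
  have K: "kk (x2i A B) = kB B"
    unfolding kk_def X2_x2i by (simp add: w1i_def)
  have P: "pf (x1i A B) (x2i A B) c' = pA A c'" for c'
    unfolding pf_def S K X1_x1i by (simp add: X1Fi_def)
  have Q: "q0 (x2i A B) (x3i A B) = qB0 B"
    unfolding q0_def S K by (rule alg1)
  have 1: "Phi1 (x1i A B) (x2i A B) = A"
  proof
    fix C show "Phi1 (x1i A B) (x2i A B) C = A C"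
    proof (cases "C \<in> lcosets\<^bsub>G\<^esub> (H_smt m)")
      case True
      then obtain j s where C: "C = l_coset G (e j s) (H_smt m)" using lc_iff by blast
      have "l_coset G (e (ri j s) False) (H_smt m) = C"
        unfolding C eq_smt by (simp add: ri_def)
      then show ?thesis unfolding C Phi1_at P pA_def by simp
    next
      case False then show ?thesis using A0 by (simp add: Phi1_def)
    qed
  qed
  have 2: "Phi2 (x2i A B) (x3i A B) = B"
  proof
    fix C show "Phi2 (x2i A B) (x3i A B) C = B C"
    proof (cases "C \<in> lcosets\<^bsub>G\<^esub> (H_s m)")
      case True
      then obtain j s where C: "C = l_coset G (e j s) (H_s m)" using lc_iff by blast
      have "C = l_coset G (e 0 s) (H_s m)" unfolding C eq_s by simp
      then show ?thesis unfolding Phi2_at C Q K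
        by (cases s) (simp_all add: qB0_def qB1_def kB_def Phi2_at)
    next
      case False then show ?thesis using B0 by (simp add: Phi2_def)
    qed
  qed
  show ?thesis using 1 2 by (simp add: phi_def psi_def)
qed


lemma psi_phi: "psi (phi ((x1, x2, x3), c)) = ((x1, x2, x3), c)" if "((x1, x2, x3), c) \<in> Mset"
proof -
  have x1m: "x1 C = 0" if "C \<notin> lcosets\<^bsub>G\<^esub> (H_triv m)" for C
    using \<open>((x1, x2, x3), c) \<in> Mset\<close> that by (auto simp: perm_mod_def E_mod_def R_mod_def)
  have x2m: "x2 C = 0" if "C \<notin> lcosets\<^bsub>G\<^esub> (H_sm m)" for C
    using \<open>((x1, x2, x3), c) \<in> Mset\<close> that by (auto simp: perm_mod_def E_mod_def R_mod_def)
  have "Psi m (x1, x2, x3) = 0" using that by (simp add: E_mod_def)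
  then have I: "\<And>j t. EqI x1 x2 x3 j t" and II: "\<And>j. EqII x1 x2 x3 j"
    using Psi_zero_iff by blast+
  let ?A = "Phi1 x1 x2" and ?B = "Phi2 x2 x3"
  have pA: "pA ?A j = pf x1 x2 j" for j
    by (simp add: pA_def Phi1_at ri_def)
  have q0: "qB0 ?B = q0 x2 x3" and q1: "qB1 ?B = q0 x2 x3 - kk x2"
    by (simp_all add: qB0_def qB1_def Phi2_at)
  have kB: "kB ?B = kk x2" by (simp add: kB_def q0 q1)
  have SP: "SP ?A = - 2 * S0 x2 - int m * x3 + 2 * int m * (S0 x2 - R * kk x2)"
  proof -
    have "SP ?A = (\<Sum>i<2*m. X1 x1 (int i) False + (S0 x2 - R * kk x2))"
      unfolding SP_def pA pf_def by (simp add: algebra_simps)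
    also have "\<dots> = (\<Sum>i<2*m. X1 x1 (int i) False) + 2 * int m * (S0 x2 - R * kk x2)"
      by (simp add: sum.distrib)
    finally show ?thesis using sumX1F[OF I] by simp
  qed
  have S0i: "S0i ?A ?B = S0 x2" and x3i: "x3i ?A ?B = x3"
    unfolding S0i_def x3i_def R1_def R2_def SP kB q0 q0_def M_eq by (simp_all add: algebra_simps)
  let ?w0 = "\<lambda>c. X2 x2 c False"
  have T: "Tf ?A ?B c = ?w0 c + ?w0 (c - 2)" for c
    using I[of c False] unfolding Tf_def pA S0i x3i kB pf_def EqI_def by simp
  have per: "?w0 (c - 2 * int m) = ?w0 c" for c
    using X2_per2(1)[of x2 "c - 2 * int m" False] by simp
  have Aw: "Aalt ?A ?B c = 2 * ?w0 c" for c
  proof -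
    have "Aalt ?A ?B c = (\<Sum>j<m. (-1) ^ j * (?w0 (c - 2 * int j) + ?w0 (c - 2 * int j - 2)))"
      unfolding Aalt_def T by (simp add: algebra_simps)
    also have "\<dots> = ?w0 c - (-1) ^ m * ?w0 (c - 2 * int m)" by (rule tele)
    finally show ?thesis using odd per by simp
  qed
  have w0: "w0i ?A ?B c = X2 x2 c False" for c by (simp add: w0i_def Aw)
  have w1: "w1i ?A ?B c = X2 x2 c True" for c
    using K_lemma[OF I II, of c] by (simp add: w1i_def w0 kB)
  have XF: "X1Fi ?A ?B c = X1 x1 c False" for c
    by (simp add: X1Fi_def pA pf_def S0i kB)
  have XT: "X1Ti ?A ?B c = X1 x1 c True" for c
    using II[of c] unfolding X1Ti_def XF w0 w1 x3i EqII_def by simp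
  have e1: "x1i ?A ?B = x1"
  proof
    fix C show "x1i ?A ?B C = x1 C"
    proof (cases "C \<in> lcosets\<^bsub>G\<^esub> (H_triv m)")
      case True
      then obtain j s where C: "C = l_coset G (e j s) (H_triv m)" using lc_iff by blast
      show ?thesis unfolding C lc_triv x1i_at XF XT by (simp add: X1_def)
    next
      case False then show ?thesis using x1m by (simp add: x1i_def)
    qed
  qed
  have e2: "x2i ?A ?B = x2"
  proof
    fix C show "x2i ?A ?B C = x2 C"
    proof (cases "C \<in> lcosets\<^bsub>G\<^esub> (H_sm m)")
      case True
      then obtain j s where C: "C = l_coset G (e j s) (H_sm m)" using lc_iff by blast
      show ?thesis unfolding C x2i_at w0 w1 by (simp add: X2_def)
    next
      case False then show ?thesis using x2m by (simp add: x2i_def)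
    qed
  qed
  show ?thesis using e1 e2 x3i by (simp add: phi_def psi_def)
qed


lemma X1_add: "X1 (x1 + y1) j s = X1 x1 j s + X1 y1 j s" by (simp add: X1_def)
lemma X2_add: "X2 (x2 + y2) j s = X2 x2 j s + X2 y2 j s" by (simp add: X2_def)
lemma S0_add: "S0 (x2 + y2) = S0 x2 + S0 y2" by (simp add: S0_def X2_add sum.distrib)
lemma kk_add: "kk (x2 + y2) = kk x2 + kk y2" by (simp add: kk_def X2_add)
lemma pf_add: "pf (x1 + y1) (x2 + y2) j = pf x1 x2 j + pf y1 y2 j"
  by (simp add: pf_def X1_add S0_add kk_add algebra_simps)
lemma q0_add: "q0 (x2 + y2) (x3 + y3) = q0 x2 x3 + q0 y2 y3"
  by (simp add: q0_def S0_add kk_add algebra_simps)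

lemma Phi1_add: "Phi1 (x1 + y1) (x2 + y2) = Phi1 x1 x2 + Phi1 y1 y2"
proof
  fix C
  have "(\<Sum>g\<in>C. if snd g then 0 else pf (x1 + y1) (x2 + y2) (int (fst g)))
      = (\<Sum>g\<in>C. (if snd g then 0 else pf x1 x2 (int (fst g))) + (if snd g then 0 else pf y1 y2 (int (fst g))))"
    by (rule sum.cong) (auto simp: pf_add)
  then show "Phi1 (x1 + y1) (x2 + y2) C = (Phi1 x1 x2 + Phi1 y1 y2) C"
    by (simp add: Phi1_def sum.distrib)
qed

lemma Phi2_add: "Phi2 (x2 + y2) (x3 + y3) = Phi2 x2 x3 + Phi2 y2 y3"
  by (rule ext) (simp add: Phi2_def q0_add kk_add)

lemma phi_add: "phi (((x1, x2, x3), c) + ((y1, y2, y3), d)) = phi ((x1, x2, x3), c) + phi ((y1, y2, y3), d)"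
  by (simp add: phi_def Phi1_add Phi2_add)

lemma X1_act: "X1 (pact G (H_triv m) (e b t) x1) j s = X1 x1 (if t then b - j else j - b) (t \<noteq> s)"
proof -
  have "X1 (pact G (H_triv m) (e b t) x1) j s = pact G (H_triv m) (e b t) x1 (l_coset G (e j s) (H_triv m))"
    by (simp add: X1_def lc_triv)
  also have "\<dots> = x1 (l_coset G (inv\<^bsub>G\<^esub> (e b t) \<otimes>\<^bsub>G\<^esub> e j s) (H_triv m))"
    by (rule pact_at[OF group_G sub_triv el_carrier el_carrier])
  finally show ?thesis by (simp add: X1_def lc_triv algebra_simps)
qed

lemma X2_act: "X2 (pact G (H_sm m) (e b t) x2) j s = X2 x2 (if t then b - j else j - b) (t \<noteq> s)"
proof -
  have "X2 (pact G (H_sm m) (e b t) x2) j s = x2 (l_coset G (inv\<^bsub>G\<^esub> (e b t) \<otimes>\<^bsub>G\<^esub> e j s) (H_sm m))"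
    unfolding X2_def by (rule pact_at[OF group_G sub_sm el_carrier el_carrier])
  then show ?thesis by (simp add: X2_def algebra_simps)
qed

lemma S0_act: "S0 (pact G (H_sm m) (e b t) x2) = (if t then S1 x2 else S0 x2)"
proof (cases t)
  case True
  have "S0 (pact G (H_sm m) (e b t) x2) = (\<Sum>i<m. X2 x2 (b - int i) True)"
    unfolding S0_def X2_act using True by simp
  also have "\<dots> = S1 x2" unfolding S1_def by (rule sum_refl) simp
  finally show ?thesis using True by simp
next
  case False
  have "S0 (pact G (H_sm m) (e b t) x2) = (\<Sum>i<m. X2 x2 (int i + (- b)) False)"
    unfolding S0_def X2_act using False by simp
  also have "\<dots> = S0 x2" unfolding S0_def by (rule sum_shift[of "\<lambda>c. X2 x2 c False"]) simp
  finally show ?thesis using False by simp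
qed

lemma kk_act:
  assumes I: "\<And>j t. EqI x1 x2 x3 j t" and II: "\<And>j. EqII x1 x2 x3 j"
  shows "kk (pact G (H_sm m) (e b t) x2) = (if t then - kk x2 else kk x2)"
proof (cases t)
  case True
  then show ?thesis using K_lemma[OF I II, of b] by (simp add: kk_def X2_act)
next
  case False
  then show ?thesis using K_lemma[OF I II, of "2 - b"] by (simp add: kk_def X2_act)
qed

lemma E1:
  assumes I: "\<And>j t. EqI x1 x2 x3 j t" and II: "\<And>j. EqII x1 x2 x3 j"
  shows "Phi1 (pact G (H_triv m) (e b t) x1) (pact G (H_sm m) (e b t) x2) = pact G (H_smt m) (e b t) (Phi1 x1 x2)"
proof
  fix C
  show "Phi1 (pact G (H_triv m) (e b t) x1) (pact G (H_sm m) (e b t) x2) C = pact G (H_smt m) (e b t) (Phi1 x1 x2) C"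
  proof (cases "C \<in> lcosets\<^bsub>G\<^esub> (H_smt m)")
    case False then show ?thesis by (simp add: Phi1_def pact_out)
  next
    case True
    then obtain j s where C: "C = l_coset G (e j s) (H_smt m)" using lc_iff by blast
    have rhs: "pact G (H_smt m) (e b t) (Phi1 x1 x2) (l_coset G (e j s) (H_smt m)) = Phi1 x1 x2 (l_coset G (e (if t then b - j else - b + j) (t \<noteq> s)) (H_smt m))"
      using pact_at[OF group_G sub_smt el_carrier[of b t] el_carrier[of j s], where f="Phi1 x1 x2"] by simp
    show ?thesis
    proof (cases t)
      case False
      have "X1 x1 (ri (j - b) s) False = X1 x1 (ri j s - b) False"
        by (rule arg_cong[where f="\<lambda>c. X1 x1 c False"]) (simp add: ri_def)
      then show ?thesis using False unfolding C rhs
        by (simp add: Phi1_at pf_def X1_act S0_act kk_act[OF I II] algebra_simps)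
    next
      case True
      let ?c = "b - ri j s"
      have XT: "X1 x1 ?c True = X1 x1 (?c + int m) False + kk x2" using X1T_lemma[OF I II, of ?c] by simp
      have idx: "ri (b - j) (\<not> s) = ?c + int m" by (simp add: ri_def)
      have S1: "S1 x2 = S0 x2 - (2 * R + 1) * kk x2" using S1_eq[OF I II] M_eq by simp
      show ?thesis using True unfolding C rhs
        by (simp add: Phi1_at pf_def X1_act S0_act kk_act[OF I II] XT idx S1 algebra_simps)
    qed
  qed
qed

lemma E2:
  assumes I: "\<And>j t. EqI x1 x2 x3 j t" and II: "\<And>j. EqII x1 x2 x3 j"
  shows "Phi2 (pact G (H_sm m) (e b t) x2) x3 = pact G (H_s m) (e b t) (Phi2 x2 x3)"
proof
  fix C
  show "Phi2 (pact G (H_sm m) (e b t) x2) x3 C = pact G (H_s m) (e b t) (Phi2 x2 x3) C"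
  proof (cases "C \<in> lcosets\<^bsub>G\<^esub> (H_s m)")
    case False then show ?thesis by (simp add: Phi2_def pact_out)
  next
    case True
    then obtain j s where C: "C = l_coset G (e j s) (H_s m)" using lc_iff by blast
    have rhs: "pact G (H_s m) (e b t) (Phi2 x2 x3) (l_coset G (e j s) (H_s m)) = Phi2 x2 x3 (l_coset G (e (if t then b - j else - b + j) (t \<noteq> s)) (H_s m))"
      using pact_at[OF group_G sub_s el_carrier[of b t] el_carrier[of j s], where f="Phi2 x2 x3"] by simp
    have S1: "S1 x2 = S0 x2 - (2 * R + 1) * kk x2" using S1_eq[OF I II] M_eq by simp
    show ?thesis unfolding C rhs
      by (cases t; cases s) (simp_all add: Phi2_at q0_def S0_act kk_act[OF I II] S1 algebra_simps)
  qed
qed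

end

theorem proposition7p11:
  fixes m :: nat
  assumes "odd m" and "0 < m"
  shows "dmod_iso (DD m)
     (E_mod m \<times> perm_mod (DD m) (H_s2smt m))
     (\<lambda>g (x, p). (R_act m g x, pact (DD m) (H_s2smt m) g p))
     (perm_mod (DD m) (H_smt m) \<times> perm_mod (DD m) (H_s m) \<times> perm_mod (DD m) (H_s2smt m))
     (\<lambda>g (a, b, c). (pact (DD m) (H_smt m) g a, pact (DD m) (H_s m) g b,
                     pact (DD m) (H_s2smt m) g c))"
proof -
  interpret DMO2 m by unfold_locales (simp_all add: assms)
  have EqM: "(\<forall>j t. EqI x1 x2 x3 j t) \<and> (\<forall>j. EqII x1 x2 x3 j)" if "((x1, x2, x3), c) \<in> Mset" for x1 x2 x3 c
  proof -
    have "Psi m (x1, x2, x3) = 0" using that by (simp add: E_mod_def)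
    then show ?thesis using Psi_zero_iff by blast
  qed
  show ?thesis unfolding dmod_iso_def
  proof (rule exI[of _ phi], intro conjI ballI)
    show "bij_betw phi Mset Nset"
    proof (rule bij_betw_byWitness[where f'=psi])
      show "\<forall>a\<in>Mset. psi (phi a) = a"
      proof
        fix a assume a: "a \<in> Mset"
        obtain x1 x2 x3 c where "a = ((x1, x2, x3), c)" by (metis prod.exhaust)
        then show "psi (phi a) = a" using psi_phi a by blast
      qed
      show "\<forall>a\<in>Nset. phi (psi a) = a"
      proof
        fix a assume a: "a \<in> Nset"
        obtain A B c where "a = (A, B, c)" by (metis prod.exhaust)
        then show "phi (psi a) = a" using phi_psi a by blast
      qed
      show "phi ` Mset \<subseteq> Nset"
      proof
        fix y assume "y \<in> phi ` Mset"
        then obtain a where a: "a \<in> Mset" "y = phi a" by blast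
        obtain x1 x2 x3 c where ac: "a = ((x1, x2, x3), c)" by (metis prod.exhaust)
        have "c \<in> perm_mod G (H_s2smt m)" using a ac by simp
        then show "y \<in> Nset" using a ac by (simp add: phi_def perm_mod_def Phi1_def Phi2_def)
      qed
      show "psi ` Nset \<subseteq> Mset"
      proof
        fix y assume "y \<in> psi ` Nset"
        then obtain a where a: "a \<in> Nset" "y = psi a" by blast
        obtain A B c where "a = (A, B, c)" by (metis prod.exhaust)
        then show "y \<in> Mset" using psi_in a by blast
      qed
    qed
  next
    fix x y assume "x \<in> Mset" "y \<in> Mset"
    obtain x1 x2 x3 c where x: "x = ((x1, x2, x3), c)" by (metis prod.exhaust)
    obtain y1 y2 y3 d where y: "y = ((y1, y2, y3), d)" by (metis prod.exhaust)
    show "phi (x + y) = phi x + phi y" unfolding x y by (rule phi_add)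
  next
    fix g x assume g: "g \<in> carrier G" and xM: "x \<in> Mset"
    obtain b t where gb: "g = e b t" using g by (rule carrier_cases)
    obtain x1 x2 x3 c where x: "x = ((x1, x2, x3), c)" by (metis prod.exhaust)
    have I: "\<And>j t. EqI x1 x2 x3 j t" and II: "\<And>j. EqII x1 x2 x3 j" using EqM xM x by blast+
    show "phi ((\<lambda>g (x, p). (R_act m g x, pact G (H_s2smt m) g p)) g x) =
          (\<lambda>g (a, b, c). (pact G (H_smt m) g a, pact G (H_s m) g b, pact G (H_s2smt m) g c)) g (phi x)"
      unfolding x gb by (simp add: R_act_def phi_def E1[OF I II] E2[OF I II])
  qed
qed

end
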